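(* Let $k$ be an algebraically closed field, $Q$ a finite acyclic quiver, and $M = (M_v, \varphi_a)_{v\in Q_0, a \in Q_1}$ a representation of $Q$ over $k$ of total dimension $n$ which is a brick, and let $w \in Q_0$ with $\dim_k M_w = m > 1$. Let $Q'$ be the quiver with $Q'_0 = Q_0 \cup \{w'\}$ ($w'$ a new vertex), $Q'_1 = Q_1 \cup \{e'\}$, where $s(e') = w'$, $t(e') = w$, and all arrows of $Q$ keep their source and target. Fix a basis of $\bigoplus_v M_v$ in which the first $m$ basis vectors span $M_w$, and let $f: kQ \to M_n(k)$ be the resulting homomorphism giving the action of $kQ$ on $M$. Then the $k$-algebra homomorphism $g: kQ' \to M_{n+1}(k\langle x_1,\dots,x_{m-1}\rangle)$ determined by $$g(a) = \begin{pmatrix} f(a) & 0 \\ 0 & 0\end{pmatrix} \ (a \in kQ),\quad g(e_{w'}) = \begin{pmatrix} 0 & 0 \\ 0 & 1 \end{pmatrix},\quad g(e') = \begin{pmatrix} 0 & X \\ 0 & 0 \end{pmatrix},$$ where $X = (1, x_1, \dots, x_{m-1}, 0, \dots, 0)^T$ is a column of length $n$, is a ring epimorphism.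
   Context: A representation is a brick if its endomorphism ring is $k$. $k\langle x_1,\dots,x_{m-1}\rangle$ is the free associative $k$-algebra. A ring homomorphism $\varphi: R \to S$ is a ring epimorphism if for any two ring homomorphisms $\varrho_1, \varrho_2: S \to T$ with $\varrho_1\varphi = \varrho_2\varphi$ one has $\varrho_1 = \varrho_2$. Arrows act by matrices supported in the (rows of the target vertex, columns of the source vertex) block. *)

theory Defs
  imports "HOL-Library.Poly_Mapping" "HOL-Computational_Algebra.Polynomial"
          "HOL-Algebra.Ring" "Jordan_Normal_Form.Matrix"
begin

definition alg_closed :: "'k::field itself \<Rightarrow> bool" where
  "alg_closed _ \<longleftrightarrow> (\<forall>p::'k poly. degree p \<ge> 1 \<longrightarrow> (\<exists>x. poly p x = 0))"

text \<open>Words over the alphabet 'x, with concatenation as (non-commutative) monoid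
  operation; the free algebra is the algebra of finitely supported k-valued
  functions on words with convolution product.\<close>

datatype 'x word = Word "'x list"

instantiation word :: (type) monoid_add
begin
definition zero_word_def: "0 = Word []"
fun plus_word :: "'a word \<Rightarrow> 'a word \<Rightarrow> 'a word" where
  "plus_word (Word a) (Word b) = Word (a @ b)"
instance
proof
  fix a b c :: "'a word"
  show "a + b + c = a + (b + c)" by (cases a; cases b; cases c) auto
  show "0 + a = a" by (cases a) (auto simp: zero_word_def)
  show "a + 0 = a" by (cases a) (auto simp: zero_word_def)
qed
end

type_synonym ('x, 'k) freealg = "'x word \<Rightarrow>\<^sub>0 'k"

definition fvar :: "'x \<Rightarrow> ('x, 'k::ring_1) freealg" where
  "fvar x = Poly_Mapping.single (Word [x]) 1"

definition fconst :: "'k::ring_1 \<Rightarrow> ('x, 'k) freealg" where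
  "fconst c = Poly_Mapping.single 0 c"

text \<open>A path is a pair (v, as): v is its source vertex and as is a list of arrows
  written in composition order (the head of the list is the last arrow traversed),
  so that paths compose like functions.  (v, []) is the trivial path e_v.\<close>

fun chain :: "('a \<Rightarrow> 'v) \<Rightarrow> ('a \<Rightarrow> 'v) \<Rightarrow> 'a list \<Rightarrow> bool" where
  "chain s t [] = True"
| "chain s t [a] = True"
| "chain s t (a # b # as) = (s a = t b \<and> chain s t (b # as))"

definition is_path :: "'v set \<Rightarrow> 'a set \<Rightarrow> ('a \<Rightarrow> 'v) \<Rightarrow> ('a \<Rightarrow> 'v) \<Rightarrow> 'v \<times> 'a list \<Rightarrow> bool" where
  "is_path V A s t p \<longleftrightarrow> fst p \<in> V \<and> set (snd p) \<subseteq> A \<and> chain s t (snd p)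
     \<and> (snd p \<noteq> [] \<longrightarrow> s (last (snd p)) = fst p)"

definition path_source :: "'v \<times> 'a list \<Rightarrow> 'v" where
  "path_source p = fst p"

definition path_target :: "('a \<Rightarrow> 'v) \<Rightarrow> 'v \<times> 'a list \<Rightarrow> 'v" where
  "path_target t p = (if snd p = [] then fst p else t (hd (snd p)))"

definition finite_quiver :: "'v set \<Rightarrow> 'a set \<Rightarrow> ('a \<Rightarrow> 'v) \<Rightarrow> ('a \<Rightarrow> 'v) \<Rightarrow> bool" where
  "finite_quiver V A s t \<longleftrightarrow> finite V \<and> finite A \<and> (\<forall>a\<in>A. s a \<in> V \<and> t a \<in> V)"

definition acyclic_quiver :: "'v set \<Rightarrow> 'a set \<Rightarrow> ('a \<Rightarrow> 'v) \<Rightarrow> ('a \<Rightarrow> 'v) \<Rightarrow> bool" where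
  "acyclic_quiver V A s t \<longleftrightarrow>
     (\<forall>p. is_path V A s t p \<and> snd p \<noteq> [] \<longrightarrow> path_target t p \<noteq> path_source p)"

definition path_comp :: "('a \<Rightarrow> 'v) \<Rightarrow> 'v \<times> 'a list \<Rightarrow> 'v \<times> 'a list \<Rightarrow> ('v \<times> 'a list) option" where
  "path_comp t p q = (if path_source p = path_target t q then Some (fst q, snd p @ snd q) else None)"

definition supp_fun :: "('p \<Rightarrow> 'k::zero) \<Rightarrow> 'p set" where
  "supp_fun c = {p. c p \<noteq> 0}"

definition path_algebra ::
  "'k::field itself \<Rightarrow> 'v set \<Rightarrow> 'a set \<Rightarrow> ('a \<Rightarrow> 'v) \<Rightarrow> ('a \<Rightarrow> 'v) \<Rightarrow> ('v \<times> 'a list \<Rightarrow> 'k) ring" where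
  "path_algebra _ V A s t = \<lparr>
     carrier = {c. finite (supp_fun c) \<and> supp_fun c \<subseteq> {p. is_path V A s t p}},
     mult = (\<lambda>c d r. \<Sum>p\<in>supp_fun c. \<Sum>q\<in>supp_fun d.
                 if path_comp t p q = Some r then c p * d q else 0),
     one = (\<lambda>p. if snd p = [] \<and> fst p \<in> V then 1 else 0),
     zero = (\<lambda>_. 0),
     add = (\<lambda>c d p. c p + d p) \<rparr>"

text \<open>A representation M of (V, A, s, t) of total dimension n, in a fixed basis:
  blk i is the vertex whose space M_v contains the i-th basis vector (i < n), and
  phi a is the n x n matrix of the arrow a, supported in the block
  (rows of t a, columns of s a).\<close>
definition matrix_rep ::
  "'v set \<Rightarrow> 'a set \<Rightarrow> ('a \<Rightarrow> 'v) \<Rightarrow> ('a \<Rightarrow> 'v) \<Rightarrow> nat \<Rightarrow> (nat \<Rightarrow> 'v) \<Rightarrow> ('a \<Rightarrow> 'k::field mat) \<Rightarrow> bool" where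
  "matrix_rep V A s t n blk phi \<longleftrightarrow>
     (\<forall>i<n. blk i \<in> V) \<and>
     (\<forall>a\<in>A. phi a \<in> carrier_mat n n \<and>
        (\<forall>i<n. \<forall>j<n. (blk i \<noteq> t a \<or> blk j \<noteq> s a) \<longrightarrow> phi a $$ (i, j) = 0))"

definition rep_endo ::
  "'a set \<Rightarrow> nat \<Rightarrow> (nat \<Rightarrow> 'v) \<Rightarrow> ('a \<Rightarrow> 'k::field mat) \<Rightarrow> 'k mat \<Rightarrow> bool" where
  "rep_endo A n blk phi E \<longleftrightarrow> E \<in> carrier_mat n n \<and>
     (\<forall>i<n. \<forall>j<n. blk i \<noteq> blk j \<longrightarrow> E $$ (i, j) = 0) \<and>
     (\<forall>a\<in>A. E * phi a = phi a * E)"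

definition is_brick ::
  "'a set \<Rightarrow> nat \<Rightarrow> (nat \<Rightarrow> 'v) \<Rightarrow> ('a \<Rightarrow> 'k::field mat) \<Rightarrow> bool" where
  "is_brick A n blk phi \<longleftrightarrow> (\<forall>E. rep_endo A n blk phi E \<longrightarrow> (\<exists>c. E = c \<cdot>\<^sub>m 1\<^sub>m n))"

definition embed_mat :: "nat \<Rightarrow> 'k::ring_1 mat \<Rightarrow> ('x, 'k) freealg mat" where
  "embed_mat n B = mat (n+1) (n+1) (\<lambda>(i,j). if i < n \<and> j < n then fconst (B $$ (i,j)) else 0)"

definition Xcol :: "nat \<Rightarrow> nat \<Rightarrow> (nat \<Rightarrow> 'x) \<Rightarrow> nat \<Rightarrow> ('x, 'k::ring_1) freealg" where
  "Xcol n m xv i = (if i = 0 then 1 else if i < m then fvar (xv i) else 0)"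

definition g_arrow ::
  "nat \<Rightarrow> nat \<Rightarrow> (nat \<Rightarrow> 'x) \<Rightarrow> ('a \<Rightarrow> 'k::ring_1 mat) \<Rightarrow> 'a \<Rightarrow> 'a \<Rightarrow> ('x, 'k) freealg mat" where
  "g_arrow n m xv phi e' a = (if a = e'
      then mat (n+1) (n+1) (\<lambda>(i,j). if i < n \<and> j = n then Xcol n m xv i else 0)
      else embed_mat n (phi a))"

definition g_vertex ::
  "nat \<Rightarrow> (nat \<Rightarrow> 'v) \<Rightarrow> 'v \<Rightarrow> 'v \<Rightarrow> ('x, 'k::ring_1) freealg mat" where
  "g_vertex n blk w' v = (if v = w'
      then mat (n+1) (n+1) (\<lambda>(i,j). if i = n \<and> j = n then 1 else 0)
      else mat (n+1) (n+1) (\<lambda>(i,j). if i < n \<and> i = j \<and> blk i = v then 1 else 0))"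

definition g_path ::
  "nat \<Rightarrow> nat \<Rightarrow> (nat \<Rightarrow> 'x) \<Rightarrow> (nat \<Rightarrow> 'v) \<Rightarrow> ('a \<Rightarrow> 'k::ring_1 mat) \<Rightarrow> 'v \<Rightarrow> 'a
     \<Rightarrow> 'v \<times> 'a list \<Rightarrow> ('x, 'k) freealg mat" where
  "g_path n m xv blk phi w' e' p = (if snd p = [] then g_vertex n blk w' (fst p)
      else foldr (\<lambda>a B. g_arrow n m xv phi e' a * B) (snd p) (1\<^sub>m (n+1)))"

definition g_hom ::
  "nat \<Rightarrow> nat \<Rightarrow> (nat \<Rightarrow> 'x) \<Rightarrow> (nat \<Rightarrow> 'v) \<Rightarrow> ('a \<Rightarrow> 'k::ring_1 mat) \<Rightarrow> 'v \<Rightarrow> 'a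
     \<Rightarrow> ('v \<times> 'a list \<Rightarrow> 'k) \<Rightarrow> ('x, 'k) freealg mat" where
  "g_hom n m xv blk phi w' e' c = mat (n+1) (n+1) (\<lambda>(i,j).
      \<Sum>p\<in>{p. c p \<noteq> 0}. fconst (c p) * (g_path n m xv blk phi w' e' p $$ (i,j)))"

text \<open>The target rings T range over all (unital) rings whose carrier lives in the
  type 'c; the theorem is stated schematically in 'c, hence for all rings.\<close>
definition ring_epi ::
  "('a, 'm) ring_scheme \<Rightarrow> ('b, 'n) ring_scheme \<Rightarrow> ('a \<Rightarrow> 'b) \<Rightarrow> 'c itself \<Rightarrow> bool" where
  "ring_epi R S \<phi> _ \<longleftrightarrow> \<phi> \<in> ring_hom R S \<and>
     (\<forall>(T :: 'c ring) \<rho>1 \<rho>2. ring T \<longrightarrow> \<rho>1 \<in> ring_hom S T \<longrightarrow> \<rho>2 \<in> ring_hom S T \<longrightarrow>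
        (\<forall>x\<in>carrier R. \<rho>1 (\<phi> x) = \<rho>2 (\<phi> x)) \<longrightarrow> (\<forall>y\<in>carrier S. \<rho>1 y = \<rho>2 y))"

end

theory Submission
  imports Defs "HOL-Library.Function_Algebras"
begin


definition fsc :: "'k::field \<Rightarrow> ('b \<Rightarrow> 'k) \<Rightarrow> ('b \<Rightarrow> 'k)" where
  "fsc c f = (\<lambda>x. c * f x)"

lemma fsc_apply[simp]: "fsc c f x = c * f x" by (simp add: fsc_def)

lemma sum_fun_apply: "(sum f A) x = (\<Sum>a\<in>A. f a x)"
  by (induction A rule: infinite_finite_induct) auto

interpretation fvs: vector_space "fsc :: 'k::field \<Rightarrow> ('b \<Rightarrow> 'k) \<Rightarrow> _"
  by unfold_locales (auto simp: fun_eq_iff algebra_simps)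

interpretation fvp: vector_space_pair "fsc :: 'k::field \<Rightarrow> ('b \<Rightarrow> 'k) \<Rightarrow> _" "fsc :: 'k \<Rightarrow> ('d \<Rightarrow> 'k) \<Rightarrow> _"
  by unfold_locales

definition mu :: "(nat \<Rightarrow> nat \<Rightarrow> 'k::field) \<times> nat \<times> nat \<Rightarrow> nat \<times> nat \<Rightarrow> 'k" where
  "mu j pq = (case j of (a,p0,q0) \<Rightarrow> case pq of (p,q) \<Rightarrow>
     (if q = q0 then a p0 p else 0) - (if p = p0 then a q q0 else 0))"

lemma mu_sum:
  fixes Z :: "nat \<times> nat \<Rightarrow> 'k::field"
  assumes "p0 < n" "q0 < n"
  shows "(\<Sum>pq\<in>{..<n}\<times>{..<n}. mu (a,p0,q0) pq * Z pq)
     = (\<Sum>m<n. a p0 m * Z (m,q0)) - (\<Sum>m<n. Z (p0,m) * a m q0)"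
proof -
  have "(\<Sum>pq\<in>{..<n}\<times>{..<n}. mu (a,p0,q0) pq * Z pq)
     = (\<Sum>p<n. \<Sum>q<n. (if q = q0 then a p0 p * Z (p,q) else 0) - (if p = p0 then a q q0 * Z (p,q) else 0))"
  proof -
    have "(\<Sum>pq\<in>{..<n}\<times>{..<n}. mu (a,p0,q0) pq * Z pq) = (\<Sum>(p,q)\<in>{..<n}\<times>{..<n}. (if q = q0 then a p0 p * Z (p,q) else 0) - (if p = p0 then a q q0 * Z (p,q) else 0))"
      by (rule sum.cong) (auto simp: mu_def algebra_simps)
    thus ?thesis by (simp add: sum.cartesian_product)
  qed
  also have "\<dots> = (\<Sum>p<n. \<Sum>q<n. (if q = q0 then a p0 p * Z (p,q) else 0)) - (\<Sum>p<n. \<Sum>q<n. (if p = p0 then a q q0 * Z (p,q) else 0))"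
    by (simp add: sum_subtractf)
  also have "(\<Sum>p<n. \<Sum>q<n. (if q = q0 then a p0 p * Z (p,q) else 0)) = (\<Sum>m<n. a p0 m * Z (m,q0))"
    using assms by (simp add: sum.delta')
  also have "(\<Sum>p<n. \<Sum>q<n. (if p = p0 then a q q0 * Z (p,q) else 0)) = (\<Sum>p<n. if p = p0 then (\<Sum>q<n. a q q0 * Z (p,q)) else 0)"
    by (rule sum.cong) auto
  also have "\<dots> = (\<Sum>m<n. Z (p0,m) * a m q0)"
    using assms by (simp add: mult.commute)
  finally show ?thesis .
qed

lemma coeffs_exist:
  fixes Gs :: "(nat \<Rightarrow> nat \<Rightarrow> 'k::field) set"
  assumes fin: "finite Gs" and n: "0 < n"
  and scal: "\<And>Z. (\<And>a p q. a\<in>Gs \<Longrightarrow> p<n \<Longrightarrow> q<n \<Longrightarrow> (\<Sum>m<n. a p m * Z (m,q)) = (\<Sum>m<n. Z (p,m) * a m q))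
        \<Longrightarrow> (\<And>p q. p<n \<Longrightarrow> q<n \<Longrightarrow> Z (p,q) = (if p = q then Z (0,0) else 0))"
  and kl: "k < n" "l < n"
  shows "\<exists>c. \<forall>p<n. \<forall>q<n. (\<Sum>j\<in>Gs\<times>{..<n}\<times>{..<n}. c j * mu j (p,q))
      = (if (p,q) = (k,l) then 1 else 0) - (if k = l \<and> (p,q) = (0,0) then 1 else 0)"
proof -
  define J where "J = Gs\<times>{..<n}\<times>{..<n}"
  have finJ: "finite J" using fin by (simp add: J_def)
  define Psi :: "(nat \<times> nat \<Rightarrow> 'k) \<Rightarrow> ((nat \<Rightarrow> nat \<Rightarrow> 'k) \<times> nat \<times> nat \<Rightarrow> 'k)" where
    "Psi Z = (\<lambda>j. if j \<in> J then (\<Sum>pq\<in>{..<n}\<times>{..<n}. mu j pq * Z pq) else 0)" for Z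
  have lin: "Vector_Spaces.linear fsc fsc Psi"
    unfolding linear_iff_module_hom module_hom_iff
    by (auto simp: Psi_def fun_eq_iff sum.distrib algebra_simps sum_distrib_left
        fvs.module_axioms)
  define V0 where "V0 = {Z :: nat \<times> nat \<Rightarrow> 'k. (\<forall>p q. \<not>(p<n \<and> q<n) \<longrightarrow> Z (p,q) = 0) \<and> Z (0,0) = 0}"
  have sub: "fvs.subspace V0"
    unfolding fvs.subspace_def V0_def by auto
  have inj: "inj_on Psi V0"
  proof -
    have "\<forall>Z\<in>V0. Psi Z = 0 \<longrightarrow> Z = 0"
    proof (intro ballI impI)
      fix Z assume Z: "Z \<in> V0" and P: "Psi Z = 0"
      have zz: "Z (p,q) = (if p = q then Z (0,0) else 0)" if "p<n" "q<n" for p q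
      proof (rule scal[OF _ that])
        fix a p q assume a: "a\<in>Gs" "p<n" "q<n"
        have "Psi Z (a,p,q) = 0" using P by simp
        hence "(\<Sum>pq\<in>{..<n}\<times>{..<n}. mu (a,p,q) pq * Z pq) = 0" using a by (simp add: Psi_def J_def)
        thus "(\<Sum>m<n. a p m * Z (m,q)) = (\<Sum>m<n. Z (p,m) * a m q)" using mu_sum[OF a(2,3), of a Z] by simp
      qed
      show "Z = 0"
      proof
        fix x show "Z x = 0 x"
        proof (cases x)
          case (Pair a b) show ?thesis
            using Z zz[of a b] unfolding Pair by (cases "a<n \<and> b<n") (auto simp: V0_def)
        qed
      qed
    qed
    thus ?thesis using fvp.linear_inj_on_iff_eq_0[OF lin sub] by simp
  qed
  obtain g where g: "Vector_Spaces.linear fsc fsc g" and gP: "\<And>v. v\<in>V0 \<Longrightarrow> g (Psi v) = v"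
    using fvp.linear_exists_left_inverse_on[OF lin sub inj] by blast
  define dl :: "(nat \<Rightarrow> nat \<Rightarrow> 'k) \<times> nat \<times> nat \<Rightarrow> _" where "dl j = (\<lambda>i. if i = j then (1::'k) else 0)" for j
  define c where "c j = g (dl j) (k,l)" for j
  have key: "(\<Sum>j\<in>J. c j * mu j (p,q)) = (if (p,q) = (k,l) then 1 else 0) - (if k = l \<and> (p,q) = (0,0) then 1 else 0)"
    if pq: "p<n" "q<n" for p q
  proof -
    define E :: "nat \<times> nat \<Rightarrow> 'k" where "E = (\<lambda>x. if x = (p,q) then 1 else 0)"
    define I0 :: "nat \<times> nat \<Rightarrow> 'k" where "I0 = (\<lambda>(a,b). if a<n \<and> b<n \<and> a = b then 1 else 0)"
    have PI0: "Psi I0 = 0"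
    proof
      fix j show "Psi I0 j = 0 j"
      proof (cases "j \<in> J")
        case True
        then obtain a p0 q0 where j: "j = (a,p0,q0)" "p0<n" "q0<n" by (auto simp: J_def)
        have "(\<Sum>m<n. a p0 m * I0 (m,q0)) = (\<Sum>m<n. if m = q0 then a p0 m else 0)" by (rule sum.cong) (auto simp: I0_def j)
        hence 1: "(\<Sum>m<n. a p0 m * I0 (m,q0)) = a p0 q0" using j by simp
        have "(\<Sum>m<n. I0 (p0,m) * a m q0) = (\<Sum>m<n. if m = p0 then a m q0 else 0)" by (rule sum.cong) (auto simp: I0_def j)
        hence 2: "(\<Sum>m<n. I0 (p0,m) * a m q0) = a p0 q0" using j by simp
        show ?thesis using 1 2 True mu_sum[OF j(2,3), of a I0] j by (simp add: Psi_def)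
      qed (simp add: Psi_def)
    qed
    have inV: "E - fsc (E (0,0)) I0 \<in> V0" using pq n by (auto simp: V0_def E_def I0_def)
    have PE: "Psi (E - fsc (E (0,0)) I0) = Psi E"
      using fvp.linear_diff[OF lin] fvp.linear_scale[OF lin] PI0 by (simp add: fun_eq_iff)
    have "E - fsc (E (0,0)) I0 = g (Psi E)" using gP[OF inV] PE by simp
    also have "Psi E = (\<Sum>j\<in>J. fsc (Psi E j) (dl j))"
      using finJ by (auto simp: fun_eq_iff sum_fun_apply dl_def Psi_def if_distrib cong: if_cong)
    also have "g \<dots> = (\<Sum>j\<in>J. fsc (Psi E j) (g (dl j)))"
      by (simp add: fvp.linear_sum[OF g] fvp.linear_scale[OF g])
    finally have eq: "E - fsc (E (0,0)) I0 = (\<Sum>j\<in>J. fsc (Psi E j) (g (dl j)))" .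
    have "(E - fsc (E (0,0)) I0) (k,l) = (\<Sum>j\<in>J. Psi E j * c j)"
      using fun_cong[OF eq, of "(k,l)"] by (simp add: sum_fun_apply c_def)
    moreover have "Psi E j = mu j (p,q)" if "j \<in> J" for j
      using that pq by (simp add: Psi_def E_def if_distrib sum.delta' cong: if_cong)
    ultimately have "(E - fsc (E (0,0)) I0) (k,l) = (\<Sum>j\<in>J. c j * mu j (p,q))"
      by (simp add: mult.commute)
    thus ?thesis using kl by (auto simp: E_def I0_def)
  qed
  thus ?thesis unfolding J_def by blast
qed




context ring begin

lemma gam_zero:
  fixes gam :: "'k::field \<Rightarrow> 'a"
  assumes gc: "\<And>c. gam c \<in> carrier R" and ga: "\<And>a b. gam (a + b) = gam a \<oplus> gam b"
  shows "gam 0 = \<zero>"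
proof -
  have "gam 0 \<oplus> gam 0 = gam 0 \<oplus> \<zero>" using ga[of 0 0] gc by simp
  thus ?thesis using gc by simp
qed

lemma transfer_T:
  fixes gam :: "'k::field \<Rightarrow> 'a" and Y :: "nat \<Rightarrow> nat \<Rightarrow> 'a" and Gs :: "(nat \<Rightarrow> nat \<Rightarrow> 'k) set"
  assumes gc: "\<And>c. gam c \<in> carrier R"
    and ga: "\<And>a b. gam (a + b) = gam a \<oplus> gam b"
    and gm: "\<And>a b. gam (a * b) = gam a \<otimes> gam b"
    and g1: "gam 1 = \<one>"
    and Yc: "\<And>p q. Y p q \<in> carrier R"
    and bal: "\<And>a p q. a \<in> Gs \<Longrightarrow> p < n \<Longrightarrow> q < n \<Longrightarrow>
        (\<Oplus>m\<in>{..<n}. gam (a p m) \<otimes> Y m q) = (\<Oplus>m\<in>{..<n}. gam (a m q) \<otimes> Y p m)"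
    and fin: "finite Gs" and n: "0 < n"
    and scal: "\<And>Z. (\<And>a p q. a\<in>Gs \<Longrightarrow> p<n \<Longrightarrow> q<n \<Longrightarrow> (\<Sum>m<n. a p m * Z (m,q)) = (\<Sum>m<n. Z (p,m) * a m q))
        \<Longrightarrow> (\<And>p q. p<n \<Longrightarrow> q<n \<Longrightarrow> Z (p,q) = (if p = q then Z (0,0) else 0))"
    and kl: "k < n" "l < n"
  shows "Y k l = (if k = l then Y 0 0 else \<zero>)"
proof -
  have "\<exists>c. \<forall>p<n. \<forall>q<n. (\<Sum>j\<in>Gs\<times>{..<n}\<times>{..<n}. c j * mu j (p,q))
      = (if (p,q) = (k,l) then 1 else 0) - (if k = l \<and> (p,q) = (0,0) then 1 else 0)"
    by (rule coeffs_exist[OF fin n scal kl])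
  then obtain c where c: "\<forall>p<n. \<forall>q<n. (\<Sum>j\<in>Gs\<times>{..<n}\<times>{..<n}. c j * mu j (p,q))
      = (if (p,q) = (k,l) then 1 else 0) - (if k = l \<and> (p,q) = (0,0) then 1 else 0)" ..
  have g0: "gam 0 = \<zero>" by (rule gam_zero[OF gc ga])
  have gneg: "gam (- 1) = \<ominus> \<one>"
  proof -
    have "gam (-1) \<oplus> \<one> = \<zero>" using ga[of "-1" 1] g1 g0 by simp
    thus ?thesis using minus_equality[of "gam (-1)" \<one>] gc by simp
  qed
  define ev where "ev \<beta> = (\<Oplus>p\<in>{..<n}. \<Oplus>q\<in>{..<n}. gam (\<beta> (p,q)) \<otimes> Y p q)" for \<beta> :: "nat \<times> nat \<Rightarrow> 'k"
  have evc: "ev \<beta> \<in> carrier R" for \<beta> unfolding ev_def by (auto intro!: finsum_closed simp: gc Yc)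
  have ev_add: "ev (\<lambda>x. \<beta>1 x + \<beta>2 x) = ev \<beta>1 \<oplus> ev \<beta>2" for \<beta>1 \<beta>2
  proof -
    have "ev (\<lambda>x. \<beta>1 x + \<beta>2 x) = (\<Oplus>p\<in>{..<n}. \<Oplus>q\<in>{..<n}. gam (\<beta>1 (p,q)) \<otimes> Y p q \<oplus> gam (\<beta>2 (p,q)) \<otimes> Y p q)"
      unfolding ev_def by (intro finsum_cong') (auto simp: ga l_distr gc Yc intro!: finsum_closed)
    also have "\<dots> = (\<Oplus>p\<in>{..<n}. (\<Oplus>q\<in>{..<n}. gam (\<beta>1 (p,q)) \<otimes> Y p q) \<oplus> (\<Oplus>q\<in>{..<n}. gam (\<beta>2 (p,q)) \<otimes> Y p q))"
      by (intro finsum_cong') (auto simp: finsum_addf gc Yc intro!: finsum_closed)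
    also have "\<dots> = ev \<beta>1 \<oplus> ev \<beta>2"
      unfolding ev_def by (rule finsum_addf) (auto simp: gc Yc intro!: finsum_closed)
    finally show ?thesis .
  qed
  have ev_scale: "ev (\<lambda>x. a * \<beta> x) = gam a \<otimes> ev \<beta>" for a \<beta>
  proof -
    have "ev (\<lambda>x. a * \<beta> x) = (\<Oplus>p\<in>{..<n}. \<Oplus>q\<in>{..<n}. gam a \<otimes> (gam (\<beta> (p,q)) \<otimes> Y p q))"
      unfolding ev_def by (intro finsum_cong') (auto simp: gm m_assoc gc Yc intro!: finsum_closed)
    also have "\<dots> = (\<Oplus>p\<in>{..<n}. gam a \<otimes> (\<Oplus>q\<in>{..<n}. gam (\<beta> (p,q)) \<otimes> Y p q))"
      by (intro finsum_cong') (auto simp: finsum_rdistr gc Yc intro!: finsum_closed)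
    also have "\<dots> = gam a \<otimes> ev \<beta>"
      unfolding ev_def by (rule finsum_rdistr[symmetric]) (auto simp: gc Yc intro!: finsum_closed)
    finally show ?thesis .
  qed
  have ev_zero: "ev (\<lambda>x. 0) = \<zero>"
    unfolding ev_def by (simp add: g0 Yc)
  have ev_cong: "ev \<beta>1 = ev \<beta>2" if "\<And>p q. p<n \<Longrightarrow> q<n \<Longrightarrow> \<beta>1 (p,q) = \<beta>2 (p,q)" for \<beta>1 \<beta>2
    unfolding ev_def using that by (intro finsum_cong') (auto simp: gc Yc intro!: finsum_closed finsum_cong')
  have ev_sum: "finite J' \<Longrightarrow> ev (\<lambda>x. \<Sum>j\<in>J'. f j x) = (\<Oplus>j\<in>J'. ev (f j))" for J' and f :: "_ \<Rightarrow> nat \<times> nat \<Rightarrow> 'k"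
  proof (induction J' rule: finite_induct)
    case empty then show ?case using ev_zero by simp
  next
    case (insert x F)
    have "ev (\<lambda>y. \<Sum>j\<in>insert x F. f j y) = ev (\<lambda>y. f x y + (\<Sum>j\<in>F. f j y))"
      using insert by simp
    also have "\<dots> = ev (f x) \<oplus> ev (\<lambda>y. \<Sum>j\<in>F. f j y)" by (rule ev_add)
    finally show ?case using insert by (simp add: finsum_insert evc)
  qed
  have ev_ind: "ev (\<lambda>x. if x = (p0,q0) then 1 else 0) = Y p0 q0" if "p0<n" "q0<n" for p0 q0
  proof -
    have "ev (\<lambda>x. if x = (p0,q0) then 1 else 0) = (\<Oplus>p\<in>{..<n}. if p0 = p then (\<Oplus>q\<in>{..<n}. if q0 = q then Y p q else \<zero>) else \<zero>)"
      unfolding ev_def by (intro finsum_cong') (auto simp: g0 g1 Yc intro!: finsum_closed finsum_cong')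
    also have "\<dots> = (\<Oplus>q\<in>{..<n}. if q0 = q then Y p0 q else \<zero>)"
      by (rule finsum_singleton) (auto simp: that Yc intro!: finsum_closed)
    also have "\<dots> = Y p0 q0" by (rule finsum_singleton) (auto simp: that Yc)
    finally show ?thesis .
  qed
  have ev_mu: "ev (mu (a,p0,q0)) = \<zero>" if a: "a \<in> Gs" "p0 < n" "q0 < n" for a p0 q0
  proof -
    define b1 where "b1 = (\<lambda>(p::nat,q::nat). if q = q0 then a p0 p else 0)"
    define b2 where "b2 = (\<lambda>(p::nat,q::nat). if p = p0 then a q q0 else 0)"
    have m: "mu (a,p0,q0) = (\<lambda>x. b1 x + (-1) * b2 x)" by (auto simp: mu_def b1_def b2_def fun_eq_iff)
    have "ev (mu (a,p0,q0)) = ev b1 \<oplus> ev (\<lambda>x. (-1) * b2 x)" unfolding m by (rule ev_add)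
    also have "ev (\<lambda>x. (-1) * b2 x) = (\<ominus> \<one>) \<otimes> ev b2" by (simp only: ev_scale gneg)
    also have "ev b1 = (\<Oplus>p\<in>{..<n}. gam (a p0 p) \<otimes> Y p q0)"
    proof -
      have "ev b1 = (\<Oplus>p\<in>{..<n}. \<Oplus>q\<in>{..<n}. if q0 = q then gam (a p0 p) \<otimes> Y p q else \<zero>)"
        unfolding ev_def b1_def by (intro finsum_cong') (auto simp: g0 gc Yc intro!: finsum_closed finsum_cong')
      also have "\<dots> = (\<Oplus>p\<in>{..<n}. gam (a p0 p) \<otimes> Y p q0)"
        by (intro finsum_cong') (auto simp: a gc Yc finsum_singleton)
      finally show ?thesis .
    qed
    also have "ev b2 = (\<Oplus>q\<in>{..<n}. gam (a q q0) \<otimes> Y p0 q)"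
    proof -
      have "ev b2 = (\<Oplus>p\<in>{..<n}. if p0 = p then (\<Oplus>q\<in>{..<n}. gam (a q q0) \<otimes> Y p q) else \<zero>)"
        unfolding ev_def b2_def by (intro finsum_cong') (auto simp: g0 gc Yc intro!: finsum_closed finsum_cong')
      also have "\<dots> = (\<Oplus>q\<in>{..<n}. gam (a q q0) \<otimes> Y p0 q)"
        by (rule finsum_singleton) (auto simp: a gc Yc intro!: finsum_closed)
      finally show ?thesis .
    qed
    moreover have Sc: "(\<Oplus>q\<in>{..<n}. gam (a q q0) \<otimes> Y p0 q) \<in> carrier R" by (auto intro!: finsum_closed simp: gc Yc)
    ultimately show ?thesis using bal[OF a] by (simp add: l_minus r_neg)
  qed
  define J where "J = Gs\<times>{..<n}\<times>{..<n}"
  have finJ: "finite J" using fin by (simp add: J_def)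
  define t1 :: "nat \<times> nat \<Rightarrow> 'k" where "t1 = (\<lambda>x. if x = (k,l) then 1 else 0)"
  define t2 :: "nat \<times> nat \<Rightarrow> 'k" where "t2 = (\<lambda>x. if k = l then (if x = (0,0) then 1 else 0) else 0)"
  have "ev (\<lambda>x. t1 x + (-1) * t2 x) = ev (\<lambda>x. \<Sum>j\<in>J. c j * mu j x)"
    by (rule ev_cong) (simp add: c J_def t1_def t2_def)
  also have "\<dots> = (\<Oplus>j\<in>J. gam (c j) \<otimes> ev (mu j))"
    using ev_sum[OF finJ, of "\<lambda>j x. c j * mu j x"] ev_scale by simp
  also have "\<dots> = (\<Oplus>j\<in>J. \<zero>)"
    by (intro finsum_cong') (auto simp: J_def ev_mu gc evc)
  also have "\<dots> = \<zero>" by simp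
  finally have z: "ev (\<lambda>x. t1 x + (-1) * t2 x) = \<zero>" .
  have "ev (\<lambda>x. t1 x + (-1) * t2 x) = ev t1 \<oplus> ev (\<lambda>x. (-1) * t2 x)" by (rule ev_add)
  also have "ev (\<lambda>x. (-1) * t2 x) = (\<ominus> \<one>) \<otimes> ev t2" by (simp only: ev_scale gneg)
  also have "ev t1 = Y k l" unfolding t1_def by (rule ev_ind[OF kl])
  also have "ev t2 = (if k = l then Y 0 0 else \<zero>)"
    by (cases "k = l") (auto simp: t2_def ev_ind[OF n n] ev_zero)
  finally have e: "Y k l \<oplus> (\<ominus> \<one>) \<otimes> (if k = l then Y 0 0 else \<zero>) = \<zero>" using z by simp
  define Z where "Z = (if k = l then Y 0 0 else \<zero>)"
  have Zc: "Z \<in> carrier R" using Yc by (simp add: Z_def)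
  have "Y k l \<oplus> \<ominus> Z = \<zero>" using e Zc by (simp add: Z_def[symmetric] l_minus)
  hence "\<ominus> (\<ominus> Z) = Y k l" using minus_equality[of "Y k l" "\<ominus> Z"] Zc Yc by simp
  thus ?thesis using Zc by (simp add: Z_def[symmetric])
qed

end



definition unit_m :: "nat \<Rightarrow> nat \<Rightarrow> nat \<Rightarrow> 'a::{zero,one} mat" where
  "unit_m N i j = mat N N (\<lambda>(p,q). if p = i \<and> q = j then 1 else 0)"
definition sunit :: "nat \<Rightarrow> 'a::zero \<Rightarrow> nat \<Rightarrow> nat \<Rightarrow> 'a mat" where
  "sunit N F i j = mat N N (\<lambda>(p,q). if p = i \<and> q = j then F else 0)"
definition scal_m :: "nat \<Rightarrow> 'a::zero \<Rightarrow> 'a mat" where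
  "scal_m N F = mat N N (\<lambda>(p,q). if p = q then F else 0)"

lemma unit_m_carrier[simp]: "unit_m N i j \<in> carrier_mat N N" by (simp add: unit_m_def)
lemma sunit_carrier[simp]: "sunit N F i j \<in> carrier_mat N N" by (simp add: sunit_def)
lemma scal_m_carrier[simp]: "scal_m N F \<in> carrier_mat N N" by (simp add: scal_m_def)

lemma if0_mult: "(if P then a else 0) * b = (if P then a*b else (0::'a::mult_zero))" by simp
lemma mult_if0: "a * (if P then b else 0) = (if P then a*b else (0::'a::mult_zero))" by simp
lemma if_conj0: "(if A \<and> B then x else 0) = (if A then (if B then x else 0) else 0)" by simp
lemmas msimps = if0_mult mult_if0 if_conj0 sum.delta sum.delta'

lemma sunit_mult:
  fixes F G :: "'a::semiring_0"
  assumes "j < N"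
  shows "sunit N F i j * sunit N G j l = sunit N (F * G) i l"
  by (rule eq_matI) (auto simp: sunit_def scalar_prod_def assms msimps)

lemma sunit_mult0:
  fixes F G :: "'a::semiring_0"
  assumes "j \<noteq> j'"
  shows "sunit N F i j * sunit N G j' l = 0\<^sub>m N N"
  using assms by (intro eq_matI) (auto simp: sunit_def scalar_prod_def msimps)

lemma unit_sunit: "unit_m N i j = sunit N 1 i j" by (simp add: unit_m_def sunit_def)

lemma scal_unit:
  fixes F :: "'a::semiring_1"
  assumes "i < N" shows "scal_m N F * unit_m N i j = sunit N F i j"
  by (rule eq_matI) (auto simp: sunit_def unit_m_def scal_m_def scalar_prod_def assms msimps)

lemma sunit_add: "sunit N (F + G) i j = sunit N F i j + sunit N (G::'a::monoid_add) i j"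
  by (rule eq_matI) (auto simp: sunit_def)

lemma scal_add: "scal_m N (F + G) = scal_m N F + scal_m N (G::'a::monoid_add)"
  by (rule eq_matI) (auto simp: scal_m_def)

lemma scal_mult: "scal_m N (F * G) = scal_m N F * scal_m N (G::'a::semiring_0)"
  by (rule eq_matI) (auto simp: scal_m_def scalar_prod_def msimps)

lemma scal_one: "scal_m N (1::'a::semiring_1) = 1\<^sub>m N"
  by (rule eq_matI) (auto simp: scal_m_def)

lemma pm_decomp: "(p::('a \<Rightarrow>\<^sub>0 'b::comm_monoid_add)) = (\<Sum>k\<in>Poly_Mapping.keys p. Poly_Mapping.single k (Poly_Mapping.lookup p k))"
proof (rule poly_mapping_eqI)
  fix i
  have "Poly_Mapping.lookup (\<Sum>k\<in>Poly_Mapping.keys p. Poly_Mapping.single k (Poly_Mapping.lookup p k)) i = (\<Sum>k\<in>Poly_Mapping.keys p. if k = i then Poly_Mapping.lookup p k else 0)"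
    by (simp add: Poly_Mapping.lookup_sum lookup_single when_def)
  also have "\<dots> = Poly_Mapping.lookup p i" by (simp add: sum.delta' in_keys_iff)
  finally show "Poly_Mapping.lookup p i = Poly_Mapping.lookup (\<Sum>k\<in>Poly_Mapping.keys p. Poly_Mapping.single k (Poly_Mapping.lookup p k)) i" by simp
qed
lemma fconst_comm: "fconst c * x = x * (fconst c :: ('x,'k::field) freealg)"
proof -
  have s: "fconst c * Poly_Mapping.single k a = Poly_Mapping.single k a * (fconst c :: ('x,'k::field) freealg)" for k a
    by (simp add: fconst_def mult_single mult.commute)
  have "fconst c * x = fconst c * (\<Sum>k\<in>Poly_Mapping.keys x. Poly_Mapping.single k (Poly_Mapping.lookup x k))" by (subst pm_decomp, rule refl)
  also have "\<dots> = (\<Sum>k\<in>Poly_Mapping.keys x. Poly_Mapping.single k (Poly_Mapping.lookup x k)) * fconst c"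
    by (simp add: sum_distrib_left sum_distrib_right s)
  also have "\<dots> = x * fconst c" by (subst (2) pm_decomp, rule refl)
  finally show ?thesis .
qed
lemma fconst_add: "fconst (a + b) = fconst a + fconst b" by (simp add: fconst_def single_add)
lemma fconst_mult: "fconst (a * b) = (fconst a * fconst b :: ('x,'k::field) freealg)" by (simp add: fconst_def mult_single)
lemma fconst_1[simp]: "fconst 1 = 1" by (simp add: fconst_def)
lemma fconst_0[simp]: "fconst 0 = 0" by (simp add: fconst_def)

lemma fvar_comm_word: "fvar x * Poly_Mapping.single (Word xs) c = (Poly_Mapping.single (Word (x # xs)) c :: ('x,'k::field) freealg)"
  by (simp add: fvar_def mult_single)

lemma single_word_fconst: "Poly_Mapping.single (Word []) c = (fconst c :: ('x,'k::field) freealg)"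
  by (simp add: fconst_def zero_word_def)

definition rowm :: "nat \<Rightarrow> (nat \<Rightarrow> 'a::zero) \<Rightarrow> nat \<Rightarrow> 'a mat" where
  "rowm N F r = mat N N (\<lambda>(i,j). if i = 0 \<and> j < r then F j else 0)"
definition colm :: "nat \<Rightarrow> (nat \<Rightarrow> 'a::zero) \<Rightarrow> nat \<Rightarrow> 'a mat" where
  "colm N F r = mat N N (\<lambda>(i,j). if j = 0 \<and> i < r then F i else 0)"
definition ediag :: "nat \<Rightarrow> nat \<Rightarrow> 'a::{zero,one} mat" where
  "ediag N r = mat N N (\<lambda>(i,j). if i = j \<and> i < r then 1 else 0)"
definition truncm :: "nat \<Rightarrow> 'a::zero mat \<Rightarrow> nat \<Rightarrow> 'a mat" where
  "truncm N M r = mat N N (\<lambda>(i,j). if i * N + j < r then M $$ (i,j) else 0)"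
definition EA :: "nat \<Rightarrow> (nat \<Rightarrow> nat \<Rightarrow> 'k::field) \<Rightarrow> ('x,'k) freealg mat" where
  "EA n a = mat (n+1) (n+1) (\<lambda>(i,j). if i < n \<and> j < n then fconst (a i j) else 0)"
definition Xmat :: "nat \<Rightarrow> nat \<Rightarrow> (nat \<Rightarrow> 'x) \<Rightarrow> ('x,'k::field) freealg mat" where
  "Xmat n m xv = mat (n+1) (n+1) (\<lambda>(i,j). if i < n \<and> j = n then Xcol n m xv i else 0)"

lemma rowm_carrier[simp]: "rowm N F r \<in> carrier_mat N N" by (simp add: rowm_def)
lemma colm_carrier[simp]: "colm N F r \<in> carrier_mat N N" by (simp add: colm_def)
lemma ediag_carrier[simp]: "ediag N r \<in> carrier_mat N N" by (simp add: ediag_def)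
lemma truncm_carrier[simp]: "truncm N M r \<in> carrier_mat N N" by (simp add: truncm_def)
lemma EA_carrier[simp]: "EA n a \<in> carrier_mat (n+1) (n+1)" by (simp add: EA_def)
lemma EA_carrier'[simp]: "EA n a \<in> carrier_mat (Suc n) (Suc n)" by (simp add: EA_def)
lemma Xmat_carrier'[simp]: "Xmat n m xv \<in> carrier_mat (Suc n) (Suc n)" by (simp add: Xmat_def)
lemma Xmat_carrier[simp]: "Xmat n m xv \<in> carrier_mat (n+1) (n+1)" by (simp add: Xmat_def)

lemma rowm_0: "rowm N F 0 = 0\<^sub>m N N" by (rule eq_matI) (auto simp: rowm_def)
lemma rowm_Suc: "rowm N F (Suc r) = rowm N F r + sunit N (F r :: 'a::monoid_add) 0 (r::nat)"
  by (rule eq_matI) (auto simp: rowm_def sunit_def)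
lemma colm_0: "colm N F 0 = 0\<^sub>m N N" by (rule eq_matI) (auto simp: colm_def)
lemma colm_Suc: "colm N F (Suc r) = colm N F r + sunit N (F r :: 'a::monoid_add) r (0::nat)"
  by (rule eq_matI) (auto simp: colm_def sunit_def)
lemma ediag_0: "ediag N 0 = 0\<^sub>m N N" by (rule eq_matI) (auto simp: ediag_def)
lemma ediag_Suc: "ediag N (Suc r) = ediag N r + (unit_m N r r :: 'a::{monoid_add,one} mat)"
  by (rule eq_matI) (auto simp: ediag_def unit_m_def)
lemma truncm_0: "truncm N M 0 = 0\<^sub>m N N" by (rule eq_matI) (auto simp: truncm_def)
lemma divmod_eq_iff: "j < (N::nat) \<Longrightarrow> (i * N + j = r) \<longleftrightarrow> (i = r div N \<and> j = r mod N)"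
  by (metis add.commute div_mult_self1 div_less mod_less mod_mult_self2 div_mult_mod_eq mult.commute less_nat_zero_code add_0)
lemma truncm_Suc: "0 < N \<Longrightarrow> truncm N M (Suc r) = truncm N M r +
    (if r < N * N then sunit N (M $$ (r div N, r mod N)) (r div N) (r mod N) else 0\<^sub>m N N :: 'a::monoid_add mat)"
proof (rule eq_matI)
  fix i j assume N: "0 < N" and ij: "i < dim_row (truncm N M r + (if r < N * N then sunit N (M $$ (r div N, r mod N)) (r div N) (r mod N) else 0\<^sub>m N N))"
    "j < dim_col (truncm N M r + (if r < N * N then sunit N (M $$ (r div N, r mod N)) (r div N) (r mod N) else 0\<^sub>m N N))"
  hence ij: "i < N" "j < N" by (auto simp: sunit_def split: if_splits)
  have e: "(i * N + j = r) \<longleftrightarrow> (i = r div N \<and> j = r mod N)" using divmod_eq_iff[OF ij(2)] .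
  have r: "i * N + j = r \<Longrightarrow> r < N * N"
  proof -
    assume "i * N + j = r"
    moreover have "i * N + j < N * N"
    proof -
      have "i * N + j < i * N + N" using ij by simp
      also have "\<dots> = (i+1) * N" by simp
      also have "\<dots> \<le> N * N" using ij by (intro mult_right_mono) auto
      finally show ?thesis .
    qed
    ultimately show ?thesis by simp
  qed
  show "truncm N M (Suc r) $$ (i, j) = (truncm N M r + (if r < N * N then sunit N (M $$ (r div N, r mod N)) (r div N) (r mod N) else 0\<^sub>m N N)) $$ (i, j)"
    using ij e r by (auto simp: truncm_def sunit_def less_Suc_eq)
qed (auto simp: truncm_def sunit_def)
lemma truncm_full: "M \<in> carrier_mat N N \<Longrightarrow> truncm N M (N * N) = M"
proof (rule eq_matI)
  fix i j assume M: "M \<in> carrier_mat N N" and "i < dim_row M" "j < dim_col M"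
  hence ij: "i < N" "j < N" by auto
  have "i * N + j < i * N + N" using ij by simp
  also have "\<dots> = (i+1) * N" by simp
  also have "\<dots> \<le> N * N" using ij by (intro mult_right_mono) auto
  finally show "truncm N M (N * N) $$ (i, j) = M $$ (i, j)" using ij by (simp add: truncm_def)
qed (auto simp: truncm_def)


lemma unit_EA: "p < n \<Longrightarrow> unit_m (Suc n) 0 p * EA n a = rowm (Suc n) (\<lambda>m. fconst (a p m)) n"
  by (rule eq_matI) (auto simp: unit_m_def EA_def rowm_def scalar_prod_def msimps)
lemma EA_unit: "q < n \<Longrightarrow> EA n a * unit_m (Suc n) q 0 = colm (Suc n) (\<lambda>m. fconst (a m q)) n"
  by (rule eq_matI) (auto simp: unit_m_def EA_def colm_def scalar_prod_def msimps)
lemma unit_ediag: "j < r \<Longrightarrow> r \<le> N \<Longrightarrow> unit_m N i j * ediag N r = (unit_m N i j :: 'a::semiring_1 mat)"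
  by (rule eq_matI) (auto simp: unit_m_def ediag_def scalar_prod_def msimps)
lemma ediag_unit: "i < r \<Longrightarrow> r \<le> N \<Longrightarrow> ediag N r * unit_m N i j = (unit_m N i j :: 'a::semiring_1 mat)"
  by (rule eq_matI) (auto simp: unit_m_def ediag_def scalar_prod_def msimps)
lemma unit_mult: "j < N \<Longrightarrow> unit_m N i j * unit_m N j l = (unit_m N i l :: 'a::semiring_1 mat)"
  by (simp add: unit_sunit sunit_mult)
lemma unit_mult0: "j \<noteq> j' \<Longrightarrow> unit_m N i j * unit_m N j' l = (0\<^sub>m N N :: 'a::semiring_1 mat)"
  by (simp add: unit_sunit sunit_mult0)
lemma sunit_0: "sunit N 0 p q = 0\<^sub>m N N" by (rule eq_matI) (auto simp: sunit_def)
lemma sunit_mult_split: "p < N \<Longrightarrow> sunit N (F * G) p q = sunit N F p p * sunit N (G::'a::semiring_0) p q"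
  by (simp add: sunit_mult)
lemma unit_Xmat0: "0 < m \<Longrightarrow> 0 < n \<Longrightarrow> unit_m (Suc n) 0 0 * Xmat n m xv = (unit_m (Suc n) 0 n :: ('x,'k::field) freealg mat)"
  by (rule eq_matI) (auto simp: unit_m_def Xmat_def Xcol_def scalar_prod_def msimps)
lemma unit_Xmat: "1 \<le> i \<Longrightarrow> i < m \<Longrightarrow> m \<le> n \<Longrightarrow> unit_m (Suc n) i i * Xmat n m xv = (sunit (Suc n) (fvar (xv i)) i n :: ('x,'k::field) freealg mat)"
  by (rule eq_matI) (auto simp: unit_m_def sunit_def Xmat_def Xcol_def scalar_prod_def msimps)
lemma scal_comm: "A \<in> carrier_mat N N \<Longrightarrow> scal_m N (fconst c) * A = A * (scal_m N (fconst c) :: ('x,'k::field) freealg mat)"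
  by (rule eq_matI) (auto simp: scal_m_def scalar_prod_def msimps fconst_comm)


context ring begin

lemma hom_closed: "h \<in> ring_hom (ring_mat TYPE('e::semiring_1) N b) R \<Longrightarrow> A \<in> carrier_mat N N \<Longrightarrow> h A \<in> carrier R"
  using ring_hom_closed[of h "ring_mat TYPE('e) N b" R A] by (simp add: ring_mat_def)
lemma hom_mult: "h \<in> ring_hom (ring_mat TYPE('e::semiring_1) N b) R \<Longrightarrow> A \<in> carrier_mat N N \<Longrightarrow> B \<in> carrier_mat N N \<Longrightarrow> h (A * B) = h A \<otimes> h B"
  using ring_hom_mult[of h "ring_mat TYPE('e) N b" R A B] by (simp add: ring_mat_def)
lemma hom_add: "h \<in> ring_hom (ring_mat TYPE('e::semiring_1) N b) R \<Longrightarrow> A \<in> carrier_mat N N \<Longrightarrow> B \<in> carrier_mat N N \<Longrightarrow> h (A + B) = h A \<oplus> h B"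
  using ring_hom_add[of h "ring_mat TYPE('e) N b" R A B] by (simp add: ring_mat_def)
lemma hom_one: "h \<in> ring_hom (ring_mat TYPE('e::semiring_1) N b) R \<Longrightarrow> h (1\<^sub>m N) = \<one>"
  using ring_hom_one[of h "ring_mat TYPE('e) N b" R] by (simp add: ring_mat_def)
lemma hom_zero: assumes h: "h \<in> ring_hom (ring_mat TYPE('e::semiring_1) N b) R" shows "h (0\<^sub>m N N) = \<zero>"
proof -
  have z: "(0\<^sub>m N N :: 'e mat) \<in> carrier_mat N N" by simp
  have "h (0\<^sub>m N N + 0\<^sub>m N N) = h (0\<^sub>m N N) \<oplus> h (0\<^sub>m N N)" by (rule hom_add[OF h z z])
  hence "h (0\<^sub>m N N) \<oplus> h (0\<^sub>m N N) = h (0\<^sub>m N N) \<oplus> \<zero>" using hom_closed[OF h z] by simp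
  thus ?thesis using hom_closed[OF h z] by simp
qed
lemma hom_seq: assumes h: "h \<in> ring_hom (ring_mat TYPE('e::semiring_1) N b) R"
  and M0: "M 0 = 0\<^sub>m N N" and MS: "\<And>r. M (Suc r) = M r + B r" and Bc: "\<And>r. B r \<in> carrier_mat N N"
  and Mc: "\<And>r. M r \<in> carrier_mat N N"
  shows "h (M r) = (\<Oplus>i\<in>{..<r}. h (B i))"
proof (induction r)
  case 0 then show ?case using hom_zero[OF h] M0 by simp
next
  case (Suc r)
  have "h (M (Suc r)) = h (M r) \<oplus> h (B r)" using MS hom_add[OF h Mc Bc] by simp
  also have "\<dots> = h (B r) \<oplus> (\<Oplus>i\<in>{..<r}. h (B i))" using Suc hom_closed[OF h Bc] hom_closed[OF h Mc]
    by (simp add: a_comm)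
  also have "\<dots> = (\<Oplus>i\<in>{..<Suc r}. h (B i))" unfolding lessThan_Suc
    by (rule finsum_insert[symmetric]) (auto intro: hom_closed[OF h Bc])
  finally show ?case .
qed

end


locale core =
  fixes T :: "('c,'m) ring_scheme" (structure)
  fixes r1 r2 :: "('x,'k::field) freealg mat \<Rightarrow> 'c" and n m :: nat and xv :: "nat \<Rightarrow> 'x"
    and Gs :: "(nat \<Rightarrow> nat \<Rightarrow> 'k) set"
  assumes ringT: "ring T"
    and h1: "r1 \<in> ring_hom (ring_mat TYPE(('x,'k) freealg) (Suc n) ()) T"
    and h2: "r2 \<in> ring_hom (ring_mat TYPE(('x,'k) freealg) (Suc n) ()) T"
    and n: "0 < n" and m: "0 < m" "m \<le> n"
    and surj: "\<And>x. \<exists>i. 1 \<le> i \<and> i < m \<and> xv i = x"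
    and fin: "finite Gs"
    and scal: "\<And>Z. (\<And>a p q. a\<in>Gs \<Longrightarrow> p<n \<Longrightarrow> q<n \<Longrightarrow> (\<Sum>m<n. a p m * Z (m,q)) = (\<Sum>m<n. Z (p,m) * a m q))
        \<Longrightarrow> (\<And>p q. p<n \<Longrightarrow> q<n \<Longrightarrow> Z (p,q) = (if p = q then Z (0,0) else 0))"
    and ag_scal: "\<And>c. r1 (scal_m (Suc n) (fconst c)) = r2 (scal_m (Suc n) (fconst c))"
    and ag_EA: "\<And>a. a \<in> Gs \<Longrightarrow> r1 (EA n a) = r2 (EA n a)"
    and ag_ediag: "r1 (ediag (Suc n) n) = r2 (ediag (Suc n) n)"
    and ag_nn: "r1 (unit_m (Suc n) n n) = r2 (unit_m (Suc n) n n)"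
    and ag_X: "r1 (Xmat n m xv) = r2 (Xmat n m xv)"
begin

sublocale ring T by (rule ringT)

definition gam :: "'k \<Rightarrow> 'c" where "gam c = r1 (scal_m (Suc n) (fconst c))"
definition Y :: "nat \<Rightarrow> nat \<Rightarrow> 'c" where "Y p q = r1 (unit_m (Suc n) 0 p) \<otimes> r2 (unit_m (Suc n) q 0)"

lemma c1: "A \<in> carrier_mat (Suc n) (Suc n) \<Longrightarrow> r1 A \<in> carrier T" by (rule hom_closed[OF h1])
lemma c2: "A \<in> carrier_mat (Suc n) (Suc n) \<Longrightarrow> r2 A \<in> carrier T" by (rule hom_closed[OF h2])
lemma m1: "A \<in> carrier_mat (Suc n) (Suc n) \<Longrightarrow> B \<in> carrier_mat (Suc n) (Suc n) \<Longrightarrow> r1 (A * B) = r1 A \<otimes> r1 B" by (rule hom_mult[OF h1])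
lemma m2: "A \<in> carrier_mat (Suc n) (Suc n) \<Longrightarrow> B \<in> carrier_mat (Suc n) (Suc n) \<Longrightarrow> r2 (A * B) = r2 A \<otimes> r2 B" by (rule hom_mult[OF h2])

lemma gc: "gam c \<in> carrier T" unfolding gam_def by (rule c1) simp
lemma gam2: "gam c = r2 (scal_m (Suc n) (fconst c))" unfolding gam_def by (rule ag_scal)
lemma ga: "gam (a + b) = gam a \<oplus> gam b"
  unfolding gam_def fconst_add scal_add by (rule hom_add[OF h1]) auto
lemma gm: "gam (a * b) = gam a \<otimes> gam b"
  unfolding gam_def fconst_mult scal_mult by (rule m1) auto
lemma g1: "gam 1 = \<one>"
  unfolding gam_def fconst_1 scal_one by (rule hom_one[OF h1])
lemma gcomm1: "A \<in> carrier_mat (Suc n) (Suc n) \<Longrightarrow> gam c \<otimes> r1 A = r1 A \<otimes> gam c"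
  unfolding gam_def by (simp add: m1[symmetric] scal_comm)
lemma gcomm2: "A \<in> carrier_mat (Suc n) (Suc n) \<Longrightarrow> gam c \<otimes> r2 A = r2 A \<otimes> gam c"
  unfolding gam2 by (simp add: m2[symmetric] scal_comm)
lemma Yc: "Y p q \<in> carrier T" unfolding Y_def by (intro m_closed c1 c2) auto

lemma r1_row: assumes p: "p < n" shows "r1 (unit_m (Suc n) 0 p * EA n a) = (\<Oplus>m\<in>{..<n}. gam (a p m) \<otimes> r1 (unit_m (Suc n) 0 m))"
proof -
  have "r1 (unit_m (Suc n) 0 p * EA n a) = r1 (rowm (Suc n) (\<lambda>m. fconst (a p m)) n)" unfolding unit_EA[OF p] ..
  also have "\<dots> = (\<Oplus>i\<in>{..<n}. r1 (sunit (Suc n) (fconst (a p i)) 0 i))"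
    by (rule hom_seq[OF h1]) (auto simp: rowm_0 rowm_Suc)
  also have "\<dots> = (\<Oplus>m\<in>{..<n}. gam (a p m) \<otimes> r1 (unit_m (Suc n) 0 m))"
    by (intro finsum_cong') (auto simp: gam_def m1[symmetric] scal_unit c1 gc intro!: m_closed)
  finally show ?thesis .
qed

lemma r2_col: assumes q: "q < n" shows "r2 (EA n a * unit_m (Suc n) q 0) = (\<Oplus>m\<in>{..<n}. gam (a m q) \<otimes> r2 (unit_m (Suc n) m 0))"
proof -
  have "r2 (EA n a * unit_m (Suc n) q 0) = r2 (colm (Suc n) (\<lambda>m. fconst (a m q)) n)" unfolding EA_unit[OF q] ..
  also have "\<dots> = (\<Oplus>i\<in>{..<n}. r2 (sunit (Suc n) (fconst (a i q)) i 0))"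
    by (rule hom_seq[OF h2]) (auto simp: colm_0 colm_Suc)
  also have "\<dots> = (\<Oplus>m\<in>{..<n}. gam (a m q) \<otimes> r2 (unit_m (Suc n) m 0))"
    by (intro finsum_cong') (auto simp: gam2 m2[symmetric] scal_unit c2 gc intro!: m_closed)
  finally show ?thesis .
qed

lemma bal: assumes a: "a \<in> Gs" and pq: "p < n" "q < n"
  shows "(\<Oplus>m\<in>{..<n}. gam (a p m) \<otimes> Y m q) = (\<Oplus>m\<in>{..<n}. gam (a m q) \<otimes> Y p m)"
proof -
  let ?u = "unit_m (Suc n)"
  have "(\<Oplus>m\<in>{..<n}. gam (a p m) \<otimes> Y m q) = (\<Oplus>m\<in>{..<n}. (gam (a p m) \<otimes> r1 (?u 0 m)) \<otimes> r2 (?u q 0))"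
    by (intro finsum_cong') (auto simp: Y_def m_assoc gc c1 c2 intro!: m_closed)
  also have "\<dots> = (\<Oplus>m\<in>{..<n}. gam (a p m) \<otimes> r1 (?u 0 m)) \<otimes> r2 (?u q 0)"
    by (rule finsum_ldistr[symmetric]) (auto simp: gc c1 c2 intro!: m_closed)
  also have "\<dots> = r1 (?u 0 p * EA n a) \<otimes> r2 (?u q 0)" using r1_row[OF pq(1)] by simp
  also have "\<dots> = r1 (?u 0 p) \<otimes> r2 (EA n a) \<otimes> r2 (?u q 0)" using m1[of "?u 0 p" "EA n a"] ag_EA[OF a] by simp
  also have "\<dots> = r1 (?u 0 p) \<otimes> r2 (EA n a * ?u q 0)" using m2[of "EA n a" "?u q 0"] by (simp add: m_assoc c1 c2)
  also have "\<dots> = r1 (?u 0 p) \<otimes> (\<Oplus>m\<in>{..<n}. gam (a m q) \<otimes> r2 (?u m 0))" using r2_col[OF pq(2)] by simp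
  also have "\<dots> = (\<Oplus>m\<in>{..<n}. r1 (?u 0 p) \<otimes> (gam (a m q) \<otimes> r2 (?u m 0)))"
    by (rule finsum_rdistr) (auto simp: gc c1 c2 intro!: m_closed)
  also have "\<dots> = (\<Oplus>m\<in>{..<n}. gam (a m q) \<otimes> Y p m)"
  proof (intro finsum_cong')
    fix i show "r1 (?u 0 p) \<otimes> (gam (a i q) \<otimes> r2 (?u i 0)) = gam (a i q) \<otimes> Y p i"
      unfolding Y_def using gcomm1[of "?u 0 p" "a i q"]
      by (simp add: m_assoc[symmetric] gc c1 c2)
  qed (auto simp: gc Yc c1 c2 intro!: m_closed)
  finally show ?thesis .
qed

lemma Ykl: "k < n \<Longrightarrow> l < n \<Longrightarrow> Y k l = (if k = l then Y 0 0 else \<zero>)"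
  by (rule transfer_T[OF gc ga gm g1 Yc bal fin n scal])


lemma ag_mult: "A \<in> carrier_mat (Suc n) (Suc n) \<Longrightarrow> B \<in> carrier_mat (Suc n) (Suc n) \<Longrightarrow> r1 A = r2 A \<Longrightarrow> r1 B = r2 B \<Longrightarrow> r1 (A * B) = r2 (A * B)"
  by (simp add: m1 m2)
lemma ag_add: "A \<in> carrier_mat (Suc n) (Suc n) \<Longrightarrow> B \<in> carrier_mat (Suc n) (Suc n) \<Longrightarrow> r1 A = r2 A \<Longrightarrow> r1 B = r2 B \<Longrightarrow> r1 (A + B) = r2 (A + B)"
  by (simp add: hom_add[OF h1] hom_add[OF h2])

lemma r_ediag1: "r1 (ediag (Suc n) n) = (\<Oplus>l\<in>{..<n}. r1 (unit_m (Suc n) l l))"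
  by (rule hom_seq[OF h1]) (auto simp: ediag_0 ediag_Suc)
lemma r_ediag2: "r2 (ediag (Suc n) n) = (\<Oplus>l\<in>{..<n}. r2 (unit_m (Suc n) l l))"
  by (rule hom_seq[OF h2]) (auto simp: ediag_0 ediag_Suc)

lemma split1: "i < n+1 \<Longrightarrow> j < n+1 \<Longrightarrow> r1 (unit_m (Suc n) i j) = r1 (unit_m (Suc n) i 0) \<otimes> r1 (unit_m (Suc n) 0 j)"
proof -
  have e: "unit_m (Suc n) i j = unit_m (Suc n) i 0 * (unit_m (Suc n) 0 j :: ('x,'k) freealg mat)" by (simp add: unit_mult)
  show ?thesis by (subst e) (rule m1; simp)
qed
lemma split2: "i < n+1 \<Longrightarrow> j < n+1 \<Longrightarrow> r2 (unit_m (Suc n) i j) = r2 (unit_m (Suc n) i 0) \<otimes> r2 (unit_m (Suc n) 0 j)"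
proof -
  have e: "unit_m (Suc n) i j = unit_m (Suc n) i 0 * (unit_m (Suc n) 0 j :: ('x,'k) freealg mat)" by (simp add: unit_mult)
  show ?thesis by (subst e) (rule m2; simp)
qed

lemma units_small: assumes ij: "i < n" "j < n" shows "r1 (unit_m (Suc n) i j) = r2 (unit_m (Suc n) i j)"
proof -
  let ?u = "unit_m (Suc n)"
  let ?Z = "Y 0 0"
  have Zc: "?Z \<in> carrier T" by (rule Yc)
  have "r1 (?u i j) = r1 (?u i j * ediag (Suc n) n)" using ij by (simp add: unit_ediag)
  also have "\<dots> = r1 (?u i j) \<otimes> r2 (ediag (Suc n) n)" by (simp add: m1 ag_ediag)
  also have "\<dots> = (\<Oplus>l\<in>{..<n}. r1 (?u i j) \<otimes> r2 (?u l l))"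
    unfolding r_ediag2 by (rule finsum_rdistr) (auto simp: c1 c2)
  also have "\<dots> = (\<Oplus>l\<in>{..<n}. if j = l then r1 (?u i 0) \<otimes> ?Z \<otimes> r2 (?u 0 l) else \<zero>)"
  proof (intro finsum_cong')
    fix l assume l: "l \<in> {..<n}"
    have "r1 (?u i j) \<otimes> r2 (?u l l) = r1 (?u i 0) \<otimes> Y j l \<otimes> r2 (?u 0 l)"
      using ij l by (simp add: split1[of i j] split2[of l l] Y_def m_assoc c1 c2)
    thus "r1 (?u i j) \<otimes> r2 (?u l l) = (if j = l then r1 (?u i 0) \<otimes> ?Z \<otimes> r2 (?u 0 l) else \<zero>)"
      using Ykl[of j l] ij l by (auto simp: c1 c2)
  qed (auto simp: c1 c2 Zc)
  also have "\<dots> = r1 (?u i 0) \<otimes> ?Z \<otimes> r2 (?u 0 j)"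
    by (rule finsum_singleton) (auto simp: ij c1 c2 Zc)
  finally have A: "r1 (?u i j) = r1 (?u i 0) \<otimes> ?Z \<otimes> r2 (?u 0 j)" .
  have "r2 (?u i j) = r2 (ediag (Suc n) n * ?u i j)" using ij by (simp add: ediag_unit)
  also have "\<dots> = r1 (ediag (Suc n) n) \<otimes> r2 (?u i j)" by (simp add: m2 ag_ediag)
  also have "\<dots> = (\<Oplus>l\<in>{..<n}. r1 (?u l l) \<otimes> r2 (?u i j))"
    unfolding r_ediag1 by (rule finsum_ldistr) (auto simp: c1 c2)
  also have "\<dots> = (\<Oplus>l\<in>{..<n}. if i = l then r1 (?u l 0) \<otimes> ?Z \<otimes> r2 (?u 0 j) else \<zero>)"
  proof (intro finsum_cong')
    fix l assume l: "l \<in> {..<n}"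
    have "r1 (?u l l) \<otimes> r2 (?u i j) = r1 (?u l 0) \<otimes> Y l i \<otimes> r2 (?u 0 j)"
      using ij l by (simp add: split1[of l l] split2[of i j] Y_def m_assoc c1 c2)
    thus "r1 (?u l l) \<otimes> r2 (?u i j) = (if i = l then r1 (?u l 0) \<otimes> ?Z \<otimes> r2 (?u 0 j) else \<zero>)"
      using Ykl[of l i] ij l by (auto simp: c1 c2)
  qed (auto simp: c1 c2 Zc)
  also have "\<dots> = r1 (?u i 0) \<otimes> ?Z \<otimes> r2 (?u 0 j)"
    by (rule finsum_singleton) (auto simp: ij c1 c2 Zc)
  finally show ?thesis using A by simp
qed


lemma unit_0n: "r1 (unit_m (Suc n) 0 n) = r2 (unit_m (Suc n) 0 n)"
proof -
  have e: "unit_m (Suc n) 0 n = unit_m (Suc n) 0 0 * (Xmat n m xv :: ('x,'k) freealg mat)"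
    by (rule sym, rule unit_Xmat0[OF m(1) n])
  show ?thesis unfolding e by (rule ag_mult) (auto simp: units_small[OF n n] ag_X)
qed

lemma unit_n0: "r1 (unit_m (Suc n) n 0) = r2 (unit_m (Suc n) n 0)"
proof -
  let ?u = "unit_m (Suc n) :: nat \<Rightarrow> nat \<Rightarrow> ('x,'k) freealg mat"
  have e1: "?u n 0 * ?u 0 n = ?u n n" by (simp add: unit_mult)
  have e2: "?u 0 n * ?u n 0 = ?u 0 0" by (simp add: unit_mult)
  have e: "?u n 0 = ?u n 0 * ?u 0 n * ?u n 0" by (simp add: unit_mult)
  have pc: "?u n 0 * ?u 0 n \<in> carrier_mat (Suc n) (Suc n)" by (rule mult_carrier_mat[of _ _ "Suc n"]) auto
  have "r1 (?u n 0 * ?u 0 n * ?u n 0) = r1 (?u n 0 * ?u 0 n) \<otimes> r1 (?u n 0)" by (rule m1[OF pc]) simp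
  hence "r1 (?u n 0) = r1 (?u n 0 * ?u 0 n) \<otimes> r1 (?u n 0)" using e by simp
  also have "\<dots> = r2 (?u n 0 * ?u 0 n) \<otimes> r1 (?u n 0)" unfolding e1 ag_nn ..
  also have "\<dots> = r2 (?u n 0) \<otimes> r1 (?u 0 n) \<otimes> r1 (?u n 0)" by (simp add: m2 unit_0n)
  also have "\<dots> = r2 (?u n 0) \<otimes> r1 (?u 0 n * ?u n 0)" by (simp add: m1 m_assoc c1 c2)
  also have "\<dots> = r2 (?u n 0) \<otimes> r2 (?u 0 n * ?u n 0)" unfolding e2 using units_small[OF n n] by simp
  also have "\<dots> = r2 (?u n 0) \<otimes> (r2 (?u 0 n) \<otimes> r2 (?u n 0))" by (simp add: m2)
  also have "\<dots> = r2 (?u n 0) \<otimes> r2 (?u 0 n) \<otimes> r2 (?u n 0)" by (simp add: m_assoc c2)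
  also have "\<dots> = r2 (?u n 0 * ?u 0 n) \<otimes> r2 (?u n 0)" by (simp add: m2)
  also have "\<dots> = r2 (?u n 0 * ?u 0 n * ?u n 0)" by (rule m2[OF pc, symmetric]) simp
  also have "\<dots> = r2 (?u n 0)" using e by simp
  finally show ?thesis .
qed

lemma units_all: assumes ij: "i < Suc n" "j < Suc n" shows "r1 (unit_m (Suc n) i j) = r2 (unit_m (Suc n) i j)"
proof (cases "i < n")
  case i: True
  show ?thesis
  proof (cases "j < n")
    case True then show ?thesis using i units_small by simp
  next
    case False hence j: "j = n" using ij by simp
    have "unit_m (Suc n) i j = unit_m (Suc n) i 0 * (unit_m (Suc n) 0 n :: ('x,'k) freealg mat)" by (simp add: unit_mult j)
    thus ?thesis by (simp add: ag_mult units_small[OF i n] unit_0n)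
  qed
next
  case False hence i: "i = n" using ij by simp
  show ?thesis
  proof (cases "j < n")
    case True
    have "unit_m (Suc n) i j = unit_m (Suc n) n 0 * (unit_m (Suc n) 0 j :: ('x,'k) freealg mat)" by (simp add: unit_mult i)
    thus ?thesis by (simp add: ag_mult units_small[OF n True] unit_n0)
  next
    case False hence j: "j = n" using ij by simp
    show ?thesis using ag_nn i j by simp
  qed
qed

lemma sunit_conj: "p < Suc n \<Longrightarrow> i < Suc n \<Longrightarrow> j < Suc n \<Longrightarrow>
   unit_m (Suc n) p i * sunit (Suc n) F i j * unit_m (Suc n) j q = sunit (Suc n) (F::('x,'k) freealg) p q"
  by (simp add: unit_sunit sunit_mult)

lemma ag_fconst: "p < Suc n \<Longrightarrow> q < Suc n \<Longrightarrow> r1 (sunit (Suc n) (fconst c) p q) = r2 (sunit (Suc n) (fconst c) p q)"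
  using scal_unit[of p "Suc n" "fconst c :: ('x,'k) freealg" q] ag_mult[of "scal_m (Suc n) (fconst c)" "unit_m (Suc n) p q"]
    ag_scal units_all by simp

lemma ag_fvar: assumes pq: "p < Suc n" "q < Suc n" shows "r1 (sunit (Suc n) (fvar x) p q) = r2 (sunit (Suc n) (fvar x) p q)"
proof -
  obtain i where i: "1 \<le> i" "i < m" "xv i = x" using surj by blast
  have iN: "i < Suc n" using i m by simp
  have "r1 (unit_m (Suc n) i i * Xmat n m xv) = r2 (unit_m (Suc n) i i * Xmat n m xv)"
    by (rule ag_mult) (simp_all add: ag_X units_all[OF iN iN])
  hence a: "r1 (sunit (Suc n) (fvar x) i n) = r2 (sunit (Suc n) (fvar x) i n)"
    unfolding unit_Xmat[OF i(1,2) m(2), of xv] i(3) .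
  have "sunit (Suc n) (fvar x :: ('x,'k) freealg) p q = unit_m (Suc n) p i * sunit (Suc n) (fvar x) i n * unit_m (Suc n) n q"
    by (rule sym, rule sunit_conj) (simp_all add: pq iN)
  moreover have pc: "unit_m (Suc n) p i * sunit (Suc n) (fvar x) i n \<in> carrier_mat (Suc n) (Suc n)"
    by (rule mult_carrier_mat[of _ _ "Suc n"]) auto
  moreover have b: "r1 (unit_m (Suc n) p i * sunit (Suc n) (fvar x) i n) = r2 (unit_m (Suc n) p i * sunit (Suc n) (fvar x) i n)"
    by (rule ag_mult) (simp_all add: a units_all pq iN)
  ultimately have eq: "sunit (Suc n) (fvar x :: ('x,'k) freealg) p q = unit_m (Suc n) p i * sunit (Suc n) (fvar x) i n * unit_m (Suc n) n q"
    and pc: "unit_m (Suc n) p i * sunit (Suc n) (fvar x) i n \<in> carrier_mat (Suc n) (Suc n)"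
    and b: "r1 (unit_m (Suc n) p i * sunit (Suc n) (fvar x) i n) = r2 (unit_m (Suc n) p i * sunit (Suc n) (fvar x) i n)"
    by auto
  have "r1 (unit_m (Suc n) p i * sunit (Suc n) (fvar x) i n * unit_m (Suc n) n q) = r2 (unit_m (Suc n) p i * sunit (Suc n) (fvar x) i n * unit_m (Suc n) n q)"
    by (rule ag_mult[OF pc _ b]) (simp_all add: units_all pq)
  thus ?thesis unfolding eq .
qed

definition PP :: "('x,'k) freealg \<Rightarrow> bool" where
  "PP F \<longleftrightarrow> (\<forall>p q. p < Suc n \<longrightarrow> q < Suc n \<longrightarrow> r1 (sunit (Suc n) F p q) = r2 (sunit (Suc n) F p q))"

lemma PP_0: "PP 0" unfolding PP_def sunit_0 by (simp add: hom_zero[OF h1] hom_zero[OF h2])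
lemma PP_add: "PP F \<Longrightarrow> PP G \<Longrightarrow> PP (F + G)" unfolding PP_def sunit_add by (simp add: ag_add)
lemma PP_mult: "PP F \<Longrightarrow> PP G \<Longrightarrow> PP (F * G)" unfolding PP_def by (simp add: sunit_mult_split ag_mult)
lemma PP_single: "PP (Poly_Mapping.single (Word xs) c)"
proof (induction xs)
  case Nil then show ?case unfolding single_word_fconst PP_def using ag_fconst by simp
next
  case (Cons x xs)
  have "PP (fvar x)" unfolding PP_def using ag_fvar by simp
  thus ?case using PP_mult[OF _ Cons] fvar_comm_word by metis
qed
lemma PP_all: "PP F"
proof -
  have s: "PP (Poly_Mapping.single w c)" for w c by (cases w) (simp add: PP_single)
  have "PP (\<Sum>k\<in>A. Poly_Mapping.single k (Poly_Mapping.lookup F k))" if "finite A" for A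
    using that by (induction A rule: finite_induct) (auto simp: PP_0 PP_add s)
  thus ?thesis by (subst pm_decomp) simp
qed

theorem core_main: "M \<in> carrier_mat (Suc n) (Suc n) \<Longrightarrow> r1 M = r2 M"
proof -
  assume M: "M \<in> carrier_mat (Suc n) (Suc n)"
  have "r1 (truncm (Suc n) M r) = r2 (truncm (Suc n) M r)" for r
  proof (induction r)
    case 0 then show ?case by (simp add: truncm_0 hom_zero[OF h1] hom_zero[OF h2])
  next
    case (Suc r)
    have "r1 (if r < Suc n * Suc n then sunit (Suc n) (M $$ (r div Suc n, r mod Suc n)) (r div Suc n) (r mod Suc n) else 0\<^sub>m (Suc n) (Suc n))
        = r2 (if r < Suc n * Suc n then sunit (Suc n) (M $$ (r div Suc n, r mod Suc n)) (r div Suc n) (r mod Suc n) else 0\<^sub>m (Suc n) (Suc n))"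
    proof (cases "r < Suc n * Suc n")
      case True
      hence "r div Suc n < Suc n" "r mod Suc n < Suc n" by (auto simp: less_mult_imp_div_less)
      thus ?thesis using True PP_all[unfolded PP_def] by simp
    qed (simp add: hom_zero[OF h1] hom_zero[OF h2])
    thus ?case using Suc by (simp add: truncm_Suc ag_add)
  qed
  from this[of "Suc n * Suc n"] show ?thesis using truncm_full[OF M] by simp
qed

end




declare atLeast0_lessThan_Suc[simp del] sum.op_ivl_Suc[simp del]

lemma mult_entry: "A \<in> carrier_mat N N' \<Longrightarrow> B \<in> carrier_mat N' N'' \<Longrightarrow> i < N \<Longrightarrow> j < N'' \<Longrightarrow>
  (A * B) $$ (i,j) = (\<Sum>l\<in>{0..<N'}. A $$ (i,l) * B $$ (l,j))"
  by (simp add: scalar_prod_def)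

lemma single_eq0: "Poly_Mapping.single k c = 0 \<longleftrightarrow> c = 0"
  by (metis lookup_single_eq single_zero)

locale qsetup =
  fixes V :: "'v set" and A :: "'a set" and s t :: "'a \<Rightarrow> 'v" and n m :: nat and blk :: "nat \<Rightarrow> 'v"
    and phi :: "'a \<Rightarrow> 'k::field mat" and w w' :: 'v and e' :: 'a and xv :: "nat \<Rightarrow> 'x"
  assumes fq: "finite_quiver V A s t" and rep: "matrix_rep V A s t n blk phi"
    and wV: "w \<in> V" and blkw: "\<forall>i<n. blk i = w \<longleftrightarrow> i < m" and m1: "m > 1" and mn: "m \<le> n"
    and w'V: "w' \<notin> V" and e'A: "e' \<notin> A"
begin

abbreviation "V' \<equiv> insert w' V"
abbreviation "A' \<equiv> insert e' A"
abbreviation "s' \<equiv> s(e' := w')"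
abbreviation "t' \<equiv> t(e' := w)"

definition idx :: "'v \<Rightarrow> nat \<Rightarrow> bool" where "idx v i \<longleftrightarrow> (i < n \<and> blk i = v) \<or> (i = n \<and> v = w')"
definition sok :: "('x,'k) freealg mat \<Rightarrow> 'v \<Rightarrow> 'v \<Rightarrow> bool" where
  "sok M u v \<longleftrightarrow> M \<in> carrier_mat (Suc n) (Suc n) \<and> (\<forall>i<Suc n. \<forall>j<Suc n. M $$ (i,j) \<noteq> 0 \<longrightarrow> idx u i \<and> idx v j)"
definition GV :: "'v \<Rightarrow> ('x,'k) freealg mat" where "GV v = g_vertex n blk w' v"
definition GA :: "'a \<Rightarrow> ('x,'k) freealg mat" where "GA a = g_arrow n m xv phi e' a"
definition GP :: "'v \<times> 'a list \<Rightarrow> ('x,'k) freealg mat" where "GP p = g_path n m xv blk phi w' e' p"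

lemma blkV: "i < n \<Longrightarrow> blk i \<in> V" using rep by (simp add: matrix_rep_def)

lemma idx_unique: "i < Suc n \<Longrightarrow> idx u i \<Longrightarrow> idx v i \<Longrightarrow> u = v"
  by (auto simp: idx_def)

lemma sok_carrier: "sok M u v \<Longrightarrow> M \<in> carrier_mat (Suc n) (Suc n)" by (simp add: sok_def)

lemma sok_mult0: assumes M: "sok M u v" and M': "sok M' u' v'" and ne: "v \<noteq> u'"
  shows "M * M' = 0\<^sub>m (Suc n) (Suc n)"
proof (rule eq_matI)
  fix i j assume ij: "i < dim_row (0\<^sub>m (Suc n) (Suc n))" "j < dim_col (0\<^sub>m (Suc n) (Suc n))"
  have "(\<Sum>l\<in>{0..<Suc n}. M $$ (i,l) * M' $$ (l,j)) = 0"
  proof (rule sum.neutral, rule ballI)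
    fix l assume l: "l \<in> {0..<Suc n}"
    show "M $$ (i,l) * M' $$ (l,j) = 0"
    proof (rule ccontr)
      assume "M $$ (i,l) * M' $$ (l,j) \<noteq> 0"
      hence "M $$ (i,l) \<noteq> 0" "M' $$ (l,j) \<noteq> 0" by auto
      hence "idx v l" "idx u' l" using M M' ij l by (auto simp: sok_def)
      thus False using idx_unique[of l v u'] l ne by auto
    qed
  qed
  moreover have "(M * M') $$ (i, j) = (\<Sum>l\<in>{0..<Suc n}. M $$ (i,l) * M' $$ (l,j))"
    using ij M M' by (intro mult_entry) (auto simp: sok_def)
  ultimately show "(M * M') $$ (i, j) = 0\<^sub>m (Suc n) (Suc n) $$ (i, j)"
    using ij by simp
qed (insert M M', auto simp: sok_def)

lemma sok_mult: assumes M: "sok M u v" and M': "sok M' v x" shows "sok (M * M') u x"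
  unfolding sok_def
proof (intro conjI allI impI)
  show "M * M' \<in> carrier_mat (Suc n) (Suc n)" using M M' by (auto simp: sok_def)
  fix i j assume i: "i < Suc n" and j: "j < Suc n" and nz: "(M * M') $$ (i, j) \<noteq> 0"
  moreover have "(M * M') $$ (i, j) = (\<Sum>l\<in>{0..<Suc n}. M $$ (i,l) * M' $$ (l,j))"
    using i j M M' by (intro mult_entry) (auto simp: sok_def)
  ultimately have "(\<Sum>l\<in>{0..<Suc n}. M $$ (i,l) * M' $$ (l,j)) \<noteq> 0" by simp
  then obtain l where l: "l \<in> {0..<Suc n}" "M $$ (i,l) * M' $$ (l,j) \<noteq> 0"
    using sum.not_neutral_contains_not_neutral by blast
  hence "M $$ (i,l) \<noteq> 0" "M' $$ (l,j) \<noteq> 0" by auto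
  thus "idx u i" "idx x j" using M M' i j l by (auto simp: sok_def)
qed

lemma GV_carrier[simp]: "GV v \<in> carrier_mat (Suc n) (Suc n)" by (simp add: GV_def g_vertex_def)
lemma GA_carrier[simp]: "GA a \<in> carrier_mat (Suc n) (Suc n)" by (simp add: GA_def g_arrow_def embed_mat_def)

lemma GV_entry: assumes v: "v \<in> V'" and ij: "i < Suc n" "j < Suc n"
  shows "GV v $$ (i,j) = (if i = j \<and> idx v i then 1 else 0)"
  using v ij w'V blkV[of i] by (auto simp: GV_def g_vertex_def idx_def)

lemma sok_GV: "v \<in> V' \<Longrightarrow> sok (GV v) v v"
  by (auto simp: sok_def GV_entry split: if_splits)

lemma GV_left: assumes M: "sok M u v" and u': "u' \<in> V'"
  shows "GV u' * M = (if u' = u then M else 0\<^sub>m (Suc n) (Suc n))"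
proof (rule eq_matI)
  fix i j assume "i < dim_row (if u' = u then M else 0\<^sub>m (Suc n) (Suc n))" "j < dim_col (if u' = u then M else 0\<^sub>m (Suc n) (Suc n))"
  hence ij: "i < Suc n" "j < Suc n" using M by (auto simp: sok_def split: if_splits)
  have "(GV u' * M) $$ (i,j) = (\<Sum>l\<in>{0..<Suc n}. (if i = l \<and> idx u' i then 1 else 0) * M $$ (l,j))"
    using ij M u' by (subst mult_entry[of _ "Suc n" "Suc n"]) (auto simp: sok_def GV_entry intro!: sum.cong)
  also have "\<dots> = (if idx u' i then M $$ (i,j) else 0)"
    using ij by (simp add: msimps)
  also have "\<dots> = (if u' = u then M else 0\<^sub>m (Suc n) (Suc n)) $$ (i,j)"
    using ij M idx_unique[of i u' u] by (auto simp: sok_def)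
  finally show "(GV u' * M) $$ (i,j) = (if u' = u then M else 0\<^sub>m (Suc n) (Suc n)) $$ (i,j)" .
qed (insert M, auto simp: sok_def GV_def g_vertex_def)

lemma GV_right: assumes M: "sok M u v" and v': "v' \<in> V'"
  shows "M * GV v' = (if v' = v then M else 0\<^sub>m (Suc n) (Suc n))"
proof (rule eq_matI)
  fix i j assume "i < dim_row (if v' = v then M else 0\<^sub>m (Suc n) (Suc n))" "j < dim_col (if v' = v then M else 0\<^sub>m (Suc n) (Suc n))"
  hence ij: "i < Suc n" "j < Suc n" using M by (auto simp: sok_def split: if_splits)
  have "(M * GV v') $$ (i,j) = (\<Sum>l\<in>{0..<Suc n}. M $$ (i,l) * (if l = j \<and> idx v' l then 1 else 0))"
    using ij M v' by (subst mult_entry[of _ "Suc n" "Suc n"]) (auto simp: sok_def GV_entry intro!: sum.cong)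
  also have "\<dots> = (if idx v' j then M $$ (i,j) else 0)"
    using ij by (simp add: msimps)
  also have "\<dots> = (if v' = v then M else 0\<^sub>m (Suc n) (Suc n)) $$ (i,j)"
    using ij M idx_unique[of j v' v] by (auto simp: sok_def)
  finally show "(M * GV v') $$ (i,j) = (if v' = v then M else 0\<^sub>m (Suc n) (Suc n)) $$ (i,j)" .
qed (insert M, auto simp: sok_def GV_def g_vertex_def)

lemma sok_GA: assumes a: "a \<in> A'" shows "sok (GA a) (t' a) (s' a)"
proof (cases "a = e'")
  case True
  show ?thesis using True blkw m1 mn
    by (auto simp: sok_def GA_def g_arrow_def idx_def Xcol_def)
next
  case False
  hence aA: "a \<in> A" using a by simp
  have z: "phi a $$ (i,j) = 0" if "i<n" "j<n" "blk i \<noteq> t a \<or> blk j \<noteq> s a" for i j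
    using rep aA that by (auto simp: matrix_rep_def)
  show ?thesis using False z
    by (auto simp: sok_def GA_def g_arrow_def embed_mat_def idx_def fconst_def single_eq0)
qed


lemma GA_one[simp]: "GA a * 1\<^sub>m (Suc n) = GA a" by (simp add: right_mult_one_mat[OF GA_carrier])

abbreviation "FR as B \<equiv> foldr (\<lambda>a B. GA a * B) as B"

lemma FR_carrier: "B \<in> carrier_mat (Suc n) (Suc n) \<Longrightarrow> FR as B \<in> carrier_mat (Suc n) (Suc n)"
  by (induction as) (auto intro: mult_carrier_mat[of _ _ "Suc n"])

lemma FR_split: "B \<in> carrier_mat (Suc n) (Suc n) \<Longrightarrow> FR as B = FR as (1\<^sub>m (Suc n)) * B"
proof (induction as)
  case Nil then show ?case by simp
next
  case (Cons a as)
  have "FR (a # as) B = GA a * (FR as (1\<^sub>m (Suc n)) * B)" using Cons by simp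
  also have "\<dots> = GA a * FR as (1\<^sub>m (Suc n)) * B"
    using Cons.prems by (simp add: assoc_mult_mat[of _ "Suc n" "Suc n" _ "Suc n" _ "Suc n"] FR_carrier)
  finally show ?case by simp
qed

lemma FR_append: "FR (as @ bs) (1\<^sub>m (Suc n)) = FR as (1\<^sub>m (Suc n)) * FR bs (1\<^sub>m (Suc n))"
  by (simp add: FR_split[OF FR_carrier[OF one_carrier_mat]])

lemma GP_nontriv: "as \<noteq> [] \<Longrightarrow> GP (v, as) = FR as (1\<^sub>m (Suc n))"
  by (simp add: GP_def g_path_def GA_def)
lemma GP_triv: "GP (v, []) = GV v" by (simp add: GP_def g_path_def GV_def)

lemma GP_carrier[simp]: "GP p \<in> carrier_mat (Suc n) (Suc n)"
  by (cases p; cases "snd p = []") (auto simp: GP_def g_path_def GA_def[symmetric] GV_def[symmetric] FR_carrier)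

lemma is_path_tail: "is_path V' A' s' t' (v, a # b # rest) \<Longrightarrow> is_path V' A' s' t' (v, b # rest) \<and> s' a = t' b"
  by (auto simp: is_path_def)

lemma sok_arrows: "as \<noteq> [] \<Longrightarrow> is_path V' A' s' t' (v, as) \<Longrightarrow> sok (FR as (1\<^sub>m (Suc n))) (t' (hd as)) v"
proof (induction as)
  case Nil then show ?case by simp
next
  case (Cons a rest)
  note IH = Cons.IH and prems = Cons.prems
  have aA: "a \<in> A'" using prems by (auto simp: is_path_def)
  show ?case
  proof (cases rest)
    case Nil
    have "s' a = v" using prems Nil by (auto simp: is_path_def split: if_splits)
    thus ?thesis using sok_GA[OF aA] Nil by simp
  next
    case (Cons b rest')
    have P2: "is_path V' A' s' t' (v, a # b # rest')" using prems(2) unfolding Cons .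
    have tl: "is_path V' A' s' t' (v, b # rest')" using is_path_tail[OF P2] by (rule conjunct1)
    have st: "s' a = t' b" using is_path_tail[OF P2] by (rule conjunct2)
    have tl': "is_path V' A' s' t' (v, rest)" using tl unfolding Cons .
    have "sok (FR rest (1\<^sub>m (Suc n))) (t' (hd rest)) v" by (rule IH[OF _ tl']) (simp add: Cons)
    hence "sok (FR rest (1\<^sub>m (Suc n))) (s' a) v" using st Cons by simp
    hence "sok (GA a * FR rest (1\<^sub>m (Suc n))) (t' a) v" by (rule sok_mult[OF sok_GA[OF aA]])
    thus ?thesis by simp
  qed
qed

lemma sok_GP: "is_path V' A' s' t' p \<Longrightarrow> sok (GP p) (path_target t' p) (fst p)"
proof (cases p)
  case (Pair v as)
  assume P: "is_path V' A' s' t' p"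
  show ?thesis
  proof (cases "as = []")
    case True
    hence "v \<in> V'" using P Pair by (simp add: is_path_def)
    thus ?thesis using True Pair sok_GV by (simp add: GP_triv path_target_def)
  next
    case False
    thus ?thesis using sok_arrows[OF False] P Pair by (simp add: GP_nontriv path_target_def)
  qed
qed

lemma GP_mult: assumes P: "is_path V' A' s' t' p" and Q: "is_path V' A' s' t' q"
  shows "GP p * GP q = (case path_comp t' p q of Some r \<Rightarrow> GP r | None \<Rightarrow> 0\<^sub>m (Suc n) (Suc n))"
proof -
  obtain v as where p: "p = (v, as)" by (cases p)
  obtain u bs where q: "q = (u, bs)" by (cases q)
  have v: "v \<in> V'" and u: "u \<in> V'" using P Q p q by (auto simp: is_path_def)
  have sp: "sok (GP p) (path_target t' p) v" using sok_GP[OF P] p by simp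
  have sq: "sok (GP q) (path_target t' q) u" using sok_GP[OF Q] q by simp
  show ?thesis
  proof (cases "v = path_target t' q")
    case True
    have pc: "path_comp t' p q = Some (u, as @ bs)" using True p q by (simp add: path_comp_def path_source_def)
    show ?thesis
    proof (cases "as = []")
      case True
      hence "GP p = GV v" using p by (simp add: GP_triv)
      thus ?thesis using GV_left[OF sq v] \<open>v = path_target t' q\<close> pc True q by simp
    next
      case False
      show ?thesis
      proof (cases "bs = []")
        case True
        have "path_target t' q = u" using True q by (simp add: path_target_def)
        hence "GP q = GV v" using True q \<open>v = path_target t' q\<close> by (simp add: GP_triv)
        moreover have "u = v" using \<open>path_target t' q = u\<close> \<open>v = path_target t' q\<close> by simp
        ultimately show ?thesis using GV_right[OF sp v] pc True p by simp
      next
        case bs: False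
        show ?thesis using pc p q False bs by (simp add: GP_nontriv FR_split[OF FR_carrier[OF one_carrier_mat]])
      qed
    qed
  next
    case False
    have pc: "path_comp t' p q = None" using False p q by (simp add: path_comp_def path_source_def)
    show ?thesis using sok_mult0[OF sp sq] False pc by simp
  qed
qed


definition GH :: "('v \<times> 'a list \<Rightarrow> 'k) \<Rightarrow> ('x,'k) freealg mat" where
  "GH c = g_hom n m xv blk phi w' e' c"
abbreviation "RR \<equiv> path_algebra TYPE('k) V' A' s' t'"

lemma GH_carrier[simp]: "GH c \<in> carrier_mat (Suc n) (Suc n)" by (simp add: GH_def g_hom_def)
lemma GH_dim[simp]: "dim_row (GH c) = Suc n" "dim_col (GH c) = Suc n" using GH_carrier[of c] by (auto simp del: GH_carrier)
lemma GP_dim[simp]: "dim_row (GP p) = Suc n" "dim_col (GP p) = Suc n" using GP_carrier[of p] by (auto simp del: GP_carrier)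

lemma GH_entry: assumes F: "finite F" "{p. c p \<noteq> 0} \<subseteq> F" and ij: "i < Suc n" "j < Suc n"
  shows "GH c $$ (i,j) = (\<Sum>p\<in>F. fconst (c p) * GP p $$ (i,j))"
proof -
  have "GH c $$ (i,j) = (\<Sum>p\<in>{p. c p \<noteq> 0}. fconst (c p) * GP p $$ (i,j))"
    using ij by (simp add: GH_def g_hom_def GP_def)
  also have "\<dots> = (\<Sum>p\<in>F. fconst (c p) * GP p $$ (i,j))"
    by (rule sum.mono_neutral_left) (use F in auto)
  finally show ?thesis .
qed

lemma carrier_RR: "c \<in> carrier RR \<longleftrightarrow> finite {p. c p \<noteq> 0} \<and> {p. c p \<noteq> 0} \<subseteq> {p. is_path V' A' s' t' p}"
  by (simp add: path_algebra_def supp_fun_def)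

lemma fconst_sum: "fconst (sum f X) = (\<Sum>a\<in>X. fconst (f a) :: ('x,'k) freealg)"
  by (induction X rule: infinite_finite_induct) (auto simp: fconst_add)

lemma GH_add: assumes x: "x \<in> carrier RR" and y: "y \<in> carrier RR"
  shows "GH (\<lambda>p. x p + y p) = GH x + GH y"
proof (rule eq_matI)
  fix i j assume "i < dim_row (GH x + GH y)" "j < dim_col (GH x + GH y)"
  hence ij: "i < Suc n" "j < Suc n" by auto
  let ?F = "{p. x p \<noteq> 0} \<union> {p. y p \<noteq> 0}"
  have F: "finite ?F" using x y by (simp add: carrier_RR)
  have "GH (\<lambda>p. x p + y p) $$ (i,j) = (\<Sum>p\<in>?F. fconst (x p + y p) * GP p $$ (i,j))"
    by (rule GH_entry[OF F _ ij]) auto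
  also have "\<dots> = (\<Sum>p\<in>?F. fconst (x p) * GP p $$ (i,j)) + (\<Sum>p\<in>?F. fconst (y p) * GP p $$ (i,j))"
    by (simp add: fconst_add distrib_right sum.distrib)
  also have "\<dots> = GH x $$ (i,j) + GH y $$ (i,j)"
    using GH_entry[OF F _ ij, of x] GH_entry[OF F _ ij, of y] by auto
  finally show "GH (\<lambda>p. x p + y p) $$ (i,j) = (GH x + GH y) $$ (i,j)" using ij by simp
qed auto

definition idxv :: "nat \<Rightarrow> 'v" where "idxv i = (if i < n then blk i else w')"

lemma idx_idxv: "i < Suc n \<Longrightarrow> idx v i \<longleftrightarrow> v = idxv i"
  by (auto simp: idx_def idxv_def)

lemma GH_vertices: assumes W: "W \<subseteq> V'"
  shows "GH (\<lambda>p. if snd p = [] \<and> fst p \<in> W then c else 0) = mat (Suc n) (Suc n) (\<lambda>(i,j). if i = j \<and> idxv i \<in> W then fconst c else 0)"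
proof (rule eq_matI)
  fix i j assume "i < dim_row (mat (Suc n) (Suc n) (\<lambda>(i,j). if i = j \<and> idxv i \<in> W then fconst c else (0::('x,'k) freealg)))"
    "j < dim_col (mat (Suc n) (Suc n) (\<lambda>(i,j). if i = j \<and> idxv i \<in> W then fconst c else (0::('x,'k) freealg)))"
  hence ij: "i < Suc n" "j < Suc n" by auto
  have finW: "finite W" using W fq by (auto simp: finite_quiver_def intro: finite_subset)
  let ?F = "(\<lambda>v. (v, [])) ` W"
  have "GH (\<lambda>p. if snd p = [] \<and> fst p \<in> W then c else 0) $$ (i,j)
      = (\<Sum>p\<in>?F. fconst (if snd p = [] \<and> fst p \<in> W then c else 0) * GP p $$ (i,j))"
    by (rule GH_entry[OF _ _ ij]) (use finW in \<open>auto split: if_splits\<close>)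
  also have "\<dots> = (\<Sum>v\<in>W. fconst c * GV v $$ (i,j))"
    by (subst sum.reindex) (auto simp: inj_on_def GP_triv)
  also have "\<dots> = (\<Sum>v\<in>W. if v = idxv i then (if i = j then fconst c else 0) else 0)"
    by (rule sum.cong) (use W ij in \<open>auto simp: GV_entry idx_idxv\<close>)
  also have "\<dots> = (if i = j \<and> idxv i \<in> W then fconst c else 0)"
    using finW by (simp add: sum.delta')
  finally show "GH (\<lambda>p. if snd p = [] \<and> fst p \<in> W then c else 0) $$ (i,j) = mat (Suc n) (Suc n) (\<lambda>(i,j). if i = j \<and> idxv i \<in> W then fconst c else 0) $$ (i,j)"
    using ij by simp
qed (auto simp: GH_def g_hom_def)

lemma GH_single: "GH (\<lambda>p. if p = p0 then 1 else 0) = GP p0"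
proof (rule eq_matI)
  fix i j assume "i < dim_row (GP p0)" "j < dim_col (GP p0)"
  hence ij: "i < Suc n" "j < Suc n" by auto
  show "GH (\<lambda>p. if p = p0 then 1 else 0) $$ (i,j) = GP p0 $$ (i,j)"
    by (subst GH_entry[OF _ _ ij, of "{p0}"]) auto
qed (auto simp: GH_def g_hom_def)


lemma idxv_V': "idxv i \<in> V'" by (auto simp: idxv_def blkV)
lemma idxv_V: "i < Suc n \<Longrightarrow> idxv i \<in> V \<longleftrightarrow> i < n" by (auto simp: idxv_def blkV w'V)

lemma GH_one: "GH (\<lambda>p. if snd p = [] \<and> fst p \<in> V' then 1 else 0) = 1\<^sub>m (Suc n)"
proof -
  have "\<forall>i. idxv i \<in> V'" using idxv_V' by blast
  thus ?thesis unfolding GH_vertices[OF subset_refl] by (intro eq_matI) auto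
qed

lemma fconst_mult_comm: "fconst a * G * (fconst b * H) = fconst (a * b) * (G * (H :: ('x,'k) freealg))"
proof -
  have "fconst a * G * (fconst b * H) = fconst a * ((G * fconst b) * H)" by (simp add: mult.assoc)
  also have "G * fconst b = fconst b * G" by (rule fconst_comm[symmetric])
  also have "fconst a * ((fconst b * G) * H) = (fconst a * fconst b) * (G * H)" by (simp add: mult.assoc)
  finally show ?thesis by (simp add: fconst_mult)
qed

lemma fconst_if0: "fconst (if P then a else 0) * (G :: ('x,'k) freealg) = (if P then fconst a * G else 0)"
  by (cases P) simp_all
lemma GH_mult: assumes x: "x \<in> carrier RR" and y: "y \<in> carrier RR"
  shows "GH (x \<otimes>\<^bsub>RR\<^esub> y) = GH x * GH y"
proof (rule eq_matI)
  fix i j assume "i < dim_row (GH x * GH y)" "j < dim_col (GH x * GH y)"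
  hence ij: "i < Suc n" "j < Suc n" by auto
  define Sx where "Sx = {p. x p \<noteq> 0}"
  define Sy where "Sy = {p. y p \<noteq> 0}"
  have fx: "finite Sx" and vx: "\<And>p. p \<in> Sx \<Longrightarrow> is_path V' A' s' t' p" using x by (auto simp: carrier_RR Sx_def)
  have fy: "finite Sy" and vy: "\<And>p. p \<in> Sy \<Longrightarrow> is_path V' A' s' t' p" using y by (auto simp: carrier_RR Sy_def)
  define z where "z = (\<lambda>r. \<Sum>p\<in>Sx. \<Sum>q\<in>Sy. if path_comp t' p q = Some r then x p * y q else 0)"
  have zdef: "x \<otimes>\<^bsub>RR\<^esub> y = z" by (simp add: path_algebra_def z_def Sx_def Sy_def supp_fun_def)
  define C where "C = (\<lambda>(p,q). the (path_comp t' p q)) ` (Sx \<times> Sy)"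
  have fC: "finite C" using fx fy by (simp add: C_def)
  have inC: "path_comp t' p q = Some r \<Longrightarrow> p \<in> Sx \<Longrightarrow> q \<in> Sy \<Longrightarrow> r \<in> C" for p q r
    unfolding C_def by (rule image_eqI[of _ _ "(p,q)"]) auto
  have zC: "{r. z r \<noteq> 0} \<subseteq> C"
  proof
    fix r assume "r \<in> {r. z r \<noteq> 0}"
    hence "(\<Sum>p\<in>Sx. \<Sum>q\<in>Sy. if path_comp t' p q = Some r then x p * y q else 0) \<noteq> 0" by (simp add: z_def)
    then obtain p where p: "p \<in> Sx" "(\<Sum>q\<in>Sy. if path_comp t' p q = Some r then x p * y q else 0) \<noteq> 0"
      by (rule sum.not_neutral_contains_not_neutral)
    from p(2) obtain q where q: "q \<in> Sy" "(if path_comp t' p q = Some r then x p * y q else 0) \<noteq> 0"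
      by (rule sum.not_neutral_contains_not_neutral)
    hence "path_comp t' p q = Some r" by (auto split: if_splits)
    thus "r \<in> C" using inC p q by auto
  qed
  have "GH z $$ (i,j) = (\<Sum>r\<in>C. fconst (z r) * GP r $$ (i,j))" by (rule GH_entry[OF fC zC ij])
  also have "\<dots> = (\<Sum>r\<in>C. \<Sum>p\<in>Sx. \<Sum>q\<in>Sy. if path_comp t' p q = Some r then fconst (x p * y q) * GP r $$ (i,j) else 0)"
  proof (intro sum.cong refl)
    fix r show "fconst (z r) * GP r $$ (i,j) = (\<Sum>p\<in>Sx. \<Sum>q\<in>Sy. if path_comp t' p q = Some r then fconst (x p * y q) * GP r $$ (i,j) else 0)"
      by (simp add: z_def fconst_sum sum_distrib_right fconst_if0)
  qed
  also have "\<dots> = (\<Sum>p\<in>Sx. \<Sum>q\<in>Sy. \<Sum>r\<in>C. if path_comp t' p q = Some r then fconst (x p * y q) * GP r $$ (i,j) else 0)"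
    by (subst sum.swap, rule sum.cong[OF refl], rule sum.swap)
  also have "\<dots> = (\<Sum>p\<in>Sx. \<Sum>q\<in>Sy. fconst (x p * y q) * (GP p * GP q) $$ (i,j))"
  proof (intro sum.cong refl)
    fix p q assume p: "p \<in> Sx" and q: "q \<in> Sy"
    show "(\<Sum>r\<in>C. if path_comp t' p q = Some r then fconst (x p * y q) * GP r $$ (i,j) else 0) = fconst (x p * y q) * (GP p * GP q) $$ (i,j)"
    proof (cases "path_comp t' p q")
      case None
      thus ?thesis using GP_mult[OF vx[OF p] vy[OF q]] ij by simp
    next
      case (Some r)
      have "r \<in> C" using inC[OF Some p q] .
      thus ?thesis using Some GP_mult[OF vx[OF p] vy[OF q]] fC by (simp add: sum.delta' eq_commute[of "Some r"])
    qed
  qed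
  also have "\<dots> = (\<Sum>p\<in>Sx. \<Sum>q\<in>Sy. \<Sum>l\<in>{0..<Suc n}. fconst (x p) * GP p $$ (i,l) * (fconst (y q) * GP q $$ (l,j)))"
  proof (intro sum.cong refl)
    fix p q
    have "(GP p * GP q) $$ (i,j) = (\<Sum>l\<in>{0..<Suc n}. GP p $$ (i,l) * GP q $$ (l,j))"
      by (rule mult_entry[OF GP_carrier GP_carrier ij])
    thus "fconst (x p * y q) * (GP p * GP q) $$ (i,j) = (\<Sum>l\<in>{0..<Suc n}. fconst (x p) * GP p $$ (i,l) * (fconst (y q) * GP q $$ (l,j)))"
      by (simp add: fconst_mult_comm sum_distrib_left)
  qed
  also have "\<dots> = (\<Sum>l\<in>{0..<Suc n}. (\<Sum>p\<in>Sx. fconst (x p) * GP p $$ (i,l)) * (\<Sum>q\<in>Sy. fconst (y q) * GP q $$ (l,j)))"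
  proof -
    have "(\<Sum>p\<in>Sx. \<Sum>q\<in>Sy. \<Sum>l\<in>{0..<Suc n}. fconst (x p) * GP p $$ (i,l) * (fconst (y q) * GP q $$ (l,j)))
        = (\<Sum>p\<in>Sx. \<Sum>l\<in>{0..<Suc n}. \<Sum>q\<in>Sy. fconst (x p) * GP p $$ (i,l) * (fconst (y q) * GP q $$ (l,j)))"
      by (rule sum.cong[OF refl], rule sum.swap)
    also have "\<dots> = (\<Sum>l\<in>{0..<Suc n}. \<Sum>p\<in>Sx. \<Sum>q\<in>Sy. fconst (x p) * GP p $$ (i,l) * (fconst (y q) * GP q $$ (l,j)))"
      by (rule sum.swap)
    also have "\<dots> = (\<Sum>l\<in>{0..<Suc n}. (\<Sum>p\<in>Sx. fconst (x p) * GP p $$ (i,l)) * (\<Sum>q\<in>Sy. fconst (y q) * GP q $$ (l,j)))"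
      by (simp only: sum_product)
    finally show ?thesis .
  qed
  also have "\<dots> = (\<Sum>l\<in>{0..<Suc n}. GH x $$ (i,l) * GH y $$ (l,j))"
  proof (intro sum.cong refl)
    fix l assume "l \<in> {0..<Suc n}"
    hence l: "l < Suc n" by simp
    show "(\<Sum>p\<in>Sx. fconst (x p) * GP p $$ (i,l)) * (\<Sum>q\<in>Sy. fconst (y q) * GP q $$ (l,j)) = GH x $$ (i,l) * GH y $$ (l,j)"
    proof -
      have "GH x $$ (i,l) = (\<Sum>p\<in>Sx. fconst (x p) * GP p $$ (i,l))" by (rule GH_entry[OF fx _ ij(1) l]) (simp add: Sx_def)
      moreover have "GH y $$ (l,j) = (\<Sum>q\<in>Sy. fconst (y q) * GP q $$ (l,j))" by (rule GH_entry[OF fy _ l ij(2)]) (simp add: Sy_def)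
      ultimately show ?thesis by simp
    qed
  qed
  also have "\<dots> = (GH x * GH y) $$ (i,j)" by (rule mult_entry[symmetric, OF GH_carrier GH_carrier ij])
  finally show "GH (x \<otimes>\<^bsub>RR\<^esub> y) $$ (i,j) = (GH x * GH y) $$ (i,j)" using zdef by simp
qed auto


lemma GH_hom: "GH \<in> ring_hom RR (ring_mat TYPE(('x,'k) freealg) (Suc n) b)"
proof (rule ring_hom_memI)
  fix x assume "x \<in> carrier RR" show "GH x \<in> carrier (ring_mat TYPE(('x,'k) freealg) (Suc n) b)" by (simp add: ring_mat_def)
next
  fix x y assume "x \<in> carrier RR" "y \<in> carrier RR"
  thus "GH (x \<otimes>\<^bsub>RR\<^esub> y) = GH x \<otimes>\<^bsub>ring_mat TYPE(('x,'k) freealg) (Suc n) b\<^esub> GH y"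
    by (simp add: GH_mult ring_mat_def)
next
  fix x y assume "x \<in> carrier RR" "y \<in> carrier RR"
  thus "GH (x \<oplus>\<^bsub>RR\<^esub> y) = GH x \<oplus>\<^bsub>ring_mat TYPE(('x,'k) freealg) (Suc n) b\<^esub> GH y"
    using GH_add by (simp add: ring_mat_def path_algebra_def)
next
  show "GH \<one>\<^bsub>RR\<^esub> = \<one>\<^bsub>ring_mat TYPE(('x,'k) freealg) (Suc n) b\<^esub>"
    using GH_one by (simp add: ring_mat_def path_algebra_def)
qed

end




context qsetup begin

definition Gs :: "(nat \<Rightarrow> nat \<Rightarrow> 'k) set" where
  "Gs = (\<lambda>a i j. phi a $$ (i,j)) ` A \<union> (\<lambda>v i j. if i = j \<and> blk i = v then 1 else 0) ` V"

lemma fin_Gs: "finite Gs" using fq by (simp add: Gs_def finite_quiver_def)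

lemma n_pos: "0 < n" using m1 mn by simp

lemma scal_Gs:
  assumes brick: "is_brick A n blk phi"
    and comm: "\<And>a p q. a\<in>Gs \<Longrightarrow> p<n \<Longrightarrow> q<n \<Longrightarrow> (\<Sum>m<n. a p m * Z (m,q)) = (\<Sum>m<n. Z (p,m) * a m q)"
    and pq: "p < n" "q < n"
  shows "Z (p,q) = (if p = q then Z (0,0) else 0)"
proof -
  define E where "E = mat n n (\<lambda>(i,j). Z (i,j))"
  have blockd: "Z (i,j) = 0" if ij: "i < n" "j < n" "blk i \<noteq> blk j" for i j
  proof -
    let ?a = "\<lambda>i j. if i = j \<and> blk i = blk j' then (1::'k) else 0" 
    define v where "v = blk j"
    have aG: "(\<lambda>i j. if i = j \<and> blk i = v then (1::'k) else 0) \<in> Gs" using blkV[OF ij(2)] by (auto simp: Gs_def v_def)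
    have "(\<Sum>m<n. (if i = m \<and> blk i = v then 1 else 0) * Z (m,j)) = (\<Sum>m<n. Z (i,m) * (if m = j \<and> blk m = v then 1 else 0))"
      using comm[OF aG ij(1,2)] by simp
    hence "(if blk i = v then Z (i,j) else 0) = Z (i,j)" using ij by (simp add: msimps v_def)
    thus ?thesis using ij(3) by (simp add: v_def)
  qed
  have "rep_endo A n blk phi E"
    unfolding rep_endo_def
  proof (intro conjI allI impI ballI)
    show "E \<in> carrier_mat n n" by (simp add: E_def)
  next
    fix i j assume "i < n" "j < n" "blk i \<noteq> blk j"
    thus "E $$ (i,j) = 0" using blockd by (simp add: E_def)
  next
    fix a assume aA: "a \<in> A"
    have pc: "phi a \<in> carrier_mat n n" using rep aA by (simp add: matrix_rep_def)
    have aG: "(\<lambda>i j. phi a $$ (i,j)) \<in> Gs" using aA by (auto simp: Gs_def)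
    show "E * phi a = phi a * E"
    proof (rule eq_matI)
      fix i j assume "i < dim_row (phi a * E)" "j < dim_col (phi a * E)"
      hence ij: "i < n" "j < n" using pc by (auto simp: E_def)
      have "(E * phi a) $$ (i,j) = (\<Sum>l\<in>{0..<n}. Z (i,l) * phi a $$ (l,j))"
        using ij pc by (subst mult_entry[of _ n n _ n]) (auto simp: E_def intro!: sum.cong)
      also have "\<dots> = (\<Sum>l<n. phi a $$ (i,l) * Z (l,j))"
        using comm[OF aG ij] by (simp add: atLeast0LessThan)
      also have "\<dots> = (phi a * E) $$ (i,j)"
        using ij pc by (subst mult_entry[of _ n n _ n]) (auto simp: E_def atLeast0LessThan intro!: sum.cong)
      finally show "(E * phi a) $$ (i,j) = (phi a * E) $$ (i,j)" .
    qed (use pc in \<open>auto simp: E_def\<close>)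
  qed
  then obtain c where c: "E = c \<cdot>\<^sub>m 1\<^sub>m n" using brick by (auto simp: is_brick_def)
  have "Z (i,j) = (if i = j then c else 0)" if "i < n" "j < n" for i j
    using arg_cong[OF c, of "\<lambda>M. M $$ (i,j)"] that by (simp add: E_def)
  thus ?thesis using pq n_pos by simp
qed


lemma carrier_single: "is_path V' A' s' t' p0 \<Longrightarrow> (\<lambda>p. if p = p0 then (1::'k) else 0) \<in> carrier RR"
  by (simp add: carrier_RR)

lemma carrier_vert: assumes W: "W \<subseteq> V'" shows "(\<lambda>p. if snd p = [] \<and> fst p \<in> W then (c::'k) else 0) \<in> carrier RR"
proof -
  have finW: "finite W" using W fq by (auto simp: finite_quiver_def intro: finite_subset)
  have s1: "{p. (if snd p = [] \<and> fst p \<in> W then c else 0) \<noteq> 0} \<subseteq> (\<lambda>v. (v, [])) ` W"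
    by (auto split: if_splits)
  have s2: "(\<lambda>v. (v, [])) ` W \<subseteq> {p. is_path V' A' s' t' p}" using W by (auto simp: is_path_def)
  show ?thesis unfolding carrier_RR
  proof
    show "finite {p. (if snd p = [] \<and> fst p \<in> W then c else 0) \<noteq> 0}" by (rule finite_subset[OF s1]) (simp add: finW)
    show "{p. (if snd p = [] \<and> fst p \<in> W then c else 0) \<noteq> 0} \<subseteq> {p. is_path V' A' s' t' p}" using s1 s2 by blast
  qed
qed

lemma path_vertex: "v \<in> V' \<Longrightarrow> is_path V' A' s' t' (v, [])" by (simp add: is_path_def)
lemma path_arrow: "a \<in> A \<Longrightarrow> is_path V' A' s' t' (s a, [a])"
  using fq e'A by (auto simp: is_path_def finite_quiver_def)
lemma path_e: "is_path V' A' s' t' (w', [e'])" by (simp add: is_path_def)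

theorem epi_main:
  assumes brick: "is_brick A n blk phi" and bij: "bij_betw xv {1..<m} (UNIV :: 'x set)"
  shows "ring_epi RR (ring_mat TYPE(('x,'k) freealg) (n+1) ()) GH TYPE('c)"
  unfolding ring_epi_def
proof (intro conjI allI impI ballI)
  show "GH \<in> ring_hom RR (ring_mat TYPE(('x,'k) freealg) (n+1) ())" using GH_hom by simp
next
  fix T :: "'c ring" and r1 r2 y
  assume T: "ring T" and h1: "r1 \<in> ring_hom (ring_mat TYPE(('x,'k) freealg) (n+1) ()) T"
    and h2: "r2 \<in> ring_hom (ring_mat TYPE(('x,'k) freealg) (n+1) ()) T"
    and ag: "\<forall>x\<in>carrier RR. r1 (GH x) = r2 (GH x)"
    and y: "y \<in> carrier (ring_mat TYPE(('x,'k) freealg) (n+1) ())"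
  have agr: "\<And>x. x \<in> carrier RR \<Longrightarrow> r1 (GH x) = r2 (GH x)" using ag by blast
  have h1': "r1 \<in> ring_hom (ring_mat TYPE(('x,'k) freealg) (Suc n) ()) T" using h1 by simp
  have h2': "r2 \<in> ring_hom (ring_mat TYPE(('x,'k) freealg) (Suc n) ()) T" using h2 by simp
  have m0: "0 < m" using m1 by simp
  have surj: "\<exists>i. 1 \<le> i \<and> i < m \<and> xv i = x" for x
  proof -
    have "x \<in> xv ` {1..<m}" using bij by (simp add: bij_betw_def)
    thus ?thesis by auto
  qed
  have scal: "\<And>Z. (\<And>a p q. a\<in>Gs \<Longrightarrow> p<n \<Longrightarrow> q<n \<Longrightarrow> (\<Sum>m<n. a p m * Z (m,q)) = (\<Sum>m<n. Z (p,m) * a m q))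
        \<Longrightarrow> (\<And>p q. p<n \<Longrightarrow> q<n \<Longrightarrow> Z (p,q) = (if p = q then Z (0,0) else 0))"
    using scal_Gs[OF brick] by blast
  have ag_scal: "r1 (scal_m (Suc n) (fconst c)) = r2 (scal_m (Suc n) (fconst c))" for c
  proof -
    have "scal_m (Suc n) (fconst c) = GH (\<lambda>p. if snd p = [] \<and> fst p \<in> V' then c else 0)"
      unfolding GH_vertices[OF subset_refl] using idxv_V' by (intro eq_matI) (auto simp: scal_m_def)
    thus ?thesis using agr[OF carrier_vert[OF subset_refl]] by simp
  qed
  have ag_EA: "r1 (EA n a) = r2 (EA n a)" if a: "a \<in> Gs" for a
  proof -
    consider (arr) a0 where "a0 \<in> A" "a = (\<lambda>i j. phi a0 $$ (i,j))"
      | (vert) v where "v \<in> V" "a = (\<lambda>i j. if i = j \<and> blk i = v then 1 else 0)"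
      using a by (auto simp: Gs_def)
    thus ?thesis
    proof cases
      case arr
      have ne: "a0 \<noteq> e'" using arr(1) e'A by auto
      have "EA n a = GP (s a0, [a0])"
        using arr ne by (simp add: GP_nontriv GA_def g_arrow_def embed_mat_def EA_def)
      also have "\<dots> = GH (\<lambda>p. if p = (s a0, [a0]) then 1 else 0)" by (rule GH_single[symmetric])
      finally show ?thesis using agr[OF carrier_single[OF path_arrow[OF arr(1)]]] by simp
    next
      case vert
      have ne: "v \<noteq> w'" using vert(1) w'V by auto
      have "EA n a = GP (v, [])"
        using vert ne by (intro eq_matI) (auto simp: GP_triv GV_def g_vertex_def EA_def)
      also have "\<dots> = GH (\<lambda>p. if p = (v, []) then 1 else 0)" by (rule GH_single[symmetric])
      finally show ?thesis using agr[OF carrier_single[OF path_vertex]] vert(1) by simp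
    qed
  qed
  have ag_ediag: "r1 (ediag (Suc n) n) = r2 (ediag (Suc n) n)"
  proof -
    have "ediag (Suc n) n = GH (\<lambda>p. if snd p = [] \<and> fst p \<in> V then (1::'k) else 0)"
      unfolding GH_vertices[OF subset_insertI] by (intro eq_matI) (auto simp: ediag_def idxv_V)
    thus ?thesis using agr[OF carrier_vert[OF subset_insertI]] by simp
  qed
  have ag_nn: "r1 (unit_m (Suc n) n n) = r2 (unit_m (Suc n) n n)"
  proof -
    have "unit_m (Suc n) n n = GP (w', [])"
      by (intro eq_matI) (auto simp: GP_triv GV_def g_vertex_def unit_m_def)
    also have "\<dots> = GH (\<lambda>p. if p = (w', []) then 1 else 0)" by (rule GH_single[symmetric])
    finally show ?thesis using agr[OF carrier_single[OF path_vertex]] by simp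
  qed
  have ag_X: "r1 (Xmat n m xv) = r2 (Xmat n m xv)"
  proof -
    have "Xmat n m xv = GP (w', [e'])"
      by (simp add: GP_nontriv GA_def g_arrow_def Xmat_def)
    also have "\<dots> = GH (\<lambda>p. if p = (w', [e']) then 1 else 0)" by (rule GH_single[symmetric])
    finally show ?thesis using agr[OF carrier_single[OF path_e]] by simp
  qed
  interpret C: core T r1 r2 n m xv Gs
    by (rule core.intro[OF T h1' h2' n_pos m0 mn surj fin_Gs scal ag_scal ag_EA ag_ediag ag_nn ag_X])
  show "r1 y = r2 y" using y C.core_main by (simp add: ring_mat_def)
qed

end


theorem mainTheorem14:
  fixes V :: "'v set" and A :: "'a set" and s t :: "'a \<Rightarrow> 'v"
    and n m :: nat and blk :: "nat \<Rightarrow> 'v" and phi :: "'a \<Rightarrow> 'k::field mat"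
    and w w' :: 'v and e' :: 'a and xv :: "nat \<Rightarrow> 'x::finite"
  assumes "alg_closed TYPE('k)"
    and "finite_quiver V A s t" and "acyclic_quiver V A s t"
    and "matrix_rep V A s t n blk phi" and "is_brick A n blk phi"
    and "w \<in> V" and "\<forall>i<n. blk i = w \<longleftrightarrow> i < m" and "m > 1" and "m \<le> n"
    and "w' \<notin> V" and "e' \<notin> A"
    and "bij_betw xv {1..<m} (UNIV :: 'x set)"
  shows "ring_epi
           (path_algebra TYPE('k) (insert w' V) (insert e' A) (s(e' := w')) (t(e' := w)))
           (ring_mat TYPE(('x, 'k) freealg) (n+1) ())
           (g_hom n m xv blk phi w' e')
           TYPE('c)"
  proof -
  interpret qsetup V A s t n m blk phi w w' e' xv
    by (rule qsetup.intro) (use assms in auto)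
  have e: "g_hom n m xv blk phi w' e' = GH" by (simp add: GH_def fun_eq_iff)
  show ?thesis unfolding e by (rule epi_main[OF assms(5) assms(12)])
qed

end
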